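(* Fix $H$, $T$, an integer $A\ge2$ (number of actions at every information set), a number $X$ of max-player information sets with $(A^H-1)/(A-1)\le X<2(A^H-1)/(A-1)$, and $\delta\in(0,1/4)$; let $K=2A^H$ and assume $T\ge0.4K\log(1/(4\delta))$. There is a universal constant $c>0$ such that for any max-player algorithm there exists a game (horizon $H$, perfect recall, every max-player information set having exactly $A$ actions, $X$ max-player information sets, rewards in $[0,1]$, min-player actions irrelevant) such that with probability greater than $\delta$, $$\mathrm{Reg}^T_{\max}\ge c\sqrt{TA_{\mathcal X}\log(1/(4\delta))},\qquad A_{\mathcal X}=AX.$$ (If $X<(A^H-1)/(A-1)$, no such game exists.)
   Context: An episodic two-player zero-sum imperfect-information game with horizon $H$ and perfect recall: the max-player has information sets $\mathcal X=\bigsqcup_h\mathcal X_h$, each with action set of size $A$; every (information set, action) pair at depth $h<H$ is followed by at least one information set at depth $h+1$. Rewards $r_h\in[0,1]$ go to the max-player. A max-player algorithm is a sequence of measurable maps sending the observed history $(x^u_h,a^u_h,r^u_h)_{u<t,h\le H}$ to the policy $\mu^t$ used in episode $t$. With $V^{\mu,\nu}=\mathbb E^{\mu,\nu}[\sum_hr_h]$ and opponent policies $\nu^t$, $\mathrm{Reg}^T_{\max}=\max_{\mu^\dagger}\sum_{t=1}^T(V^{\mu^\dagger,\nu^t}-V^{\mu^t,\nu^t})$. *)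

theory Defs
  imports "HOL-Probability.Probability"
begin

text \<open>Max-player view of an episodic imperfect-information game in which the
min-player's actions are irrelevant.  Information sets are natural numbers,
actions at every information set are 0,...,A-1.  The field trn gives, for an
information set x and action a, the joint law of the reward r_h and the next
information set x_{h+1} (the second component is ignored at depth H).\<close>

record game =
  hor  :: nat
  nact :: nat
  infs :: "nat set"
  lvl  :: "nat \<Rightarrow> nat"
  par  :: "nat \<Rightarrow> nat \<times> nat"
  init :: "nat pmf"
  trn  :: "nat \<Rightarrow> nat \<Rightarrow> (real \<times> nat) pmf"

definition wf_game :: "game \<Rightarrow> bool" where
  "wf_game G \<longleftrightarrow>
     finite (infs G) \<and>
     (\<forall>x\<in>infs G. 1 \<le> lvl G x \<and> lvl G x \<le> hor G) \<and>
     set_pmf (init G) \<subseteq> {x\<in>infs G. lvl G x = 1} \<and>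
     \<comment> \<open>perfect recall: every infoset at depth h+1 has a unique predecessor pair at depth h\<close>
     (\<forall>y\<in>infs G. 2 \<le> lvl G y \<longrightarrow>
        fst (par G y) \<in> infs G \<and> lvl G (fst (par G y)) + 1 = lvl G y \<and> snd (par G y) < nact G) \<and>
     \<comment> \<open>every (infoset, action) pair at depth h < H is followed by some infoset at depth h+1\<close>
     (\<forall>x\<in>infs G. \<forall>a<nact G. lvl G x < hor G \<longrightarrow>
        (\<exists>y\<in>infs G. lvl G y = lvl G x + 1 \<and> par G y = (x, a))) \<and>
     \<comment> \<open>rewards in [0,1]; transitions respect the infoset tree\<close>
     (\<forall>x\<in>infs G. \<forall>a<nact G. \<forall>(r, y)\<in>set_pmf (trn G x a).
        0 \<le> r \<and> r \<le> 1 \<and>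
        (lvl G x < hor G \<longrightarrow> y \<in> infs G \<and> lvl G y = lvl G x + 1 \<and> par G y = (x, a)))"

type_synonym policy = "nat \<Rightarrow> nat pmf"
type_synonym traj = "(nat \<times> nat \<times> real) list"

definition policies :: "nat \<Rightarrow> policy set" where
  "policies A = {\<mu>. \<forall>x. set_pmf (\<mu> x) \<subseteq> {..<A}}"

primrec ep :: "game \<Rightarrow> policy \<Rightarrow> nat \<Rightarrow> nat \<Rightarrow> traj pmf" where
  "ep G \<mu> 0 x = return_pmf []"
| "ep G \<mu> (Suc n) x =
     bind_pmf (\<mu> x) (\<lambda>a. bind_pmf (trn G x a)
       (\<lambda>(r, y). map_pmf (Cons (x, a, r)) (ep G \<mu> n y)))"

definition episode :: "game \<Rightarrow> policy \<Rightarrow> traj pmf" where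
  "episode G \<mu> = bind_pmf (init G) (ep G \<mu> (hor G))"

definition val :: "game \<Rightarrow> policy \<Rightarrow> real" where
  "val G \<mu> = measure_pmf.expectation (episode G \<mu>) (\<lambda>\<tau>. sum_list (map (\<lambda>(x, a, r). r) \<tau>))"

text \<open>A (deterministic) max-player algorithm maps the observed history (list of
the previous episodes' trajectories) to the policy used in the next episode.\<close>
type_synonym algorithm = "traj list \<Rightarrow> policy"

primrec hist :: "game \<Rightarrow> algorithm \<Rightarrow> nat \<Rightarrow> traj list pmf" where
  "hist G alg 0 = return_pmf []"
| "hist G alg (Suc t) =
     bind_pmf (hist G alg t) (\<lambda>hs. map_pmf (\<lambda>\<tau>. hs @ [\<tau>]) (episode G (alg hs)))"

text \<open>Reg^T_max on a realised history hs (episode t+1 uses policy alg (take t hs)).\<close>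
definition regret :: "game \<Rightarrow> algorithm \<Rightarrow> nat \<Rightarrow> traj list \<Rightarrow> real" where
  "regret G alg T hs =
     Sup ((\<lambda>\<mu>. \<Sum>t<T. val G \<mu> - val G (alg (take t hs))) ` policies (nact G))"

end

theory Submission
  imports Defs
begin

section \<open>Tree combinatorics\<close>

function lv :: "nat \<Rightarrow> nat \<Rightarrow> nat" where
  "lv A n = (if n = 0 then 1 else Suc (lv A ((n - 1) div A)))"
  by pat_completeness auto
termination
  by (relation "Wellfounded.measure snd") (auto intro: le_less_trans[OF div_le_dividend])

declare lv.simps[simp del]

lemma lv_0[simp]: "lv A 0 = 1"
  by (simp add: lv.simps)

lemma lv_succ[simp]: "a < A \<Longrightarrow> lv A (Suc (A * x + a)) = Suc (lv A x)"
  by (subst lv.simps) simp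

lemma lv_ge1: "1 \<le> lv A n"
  by (subst lv.simps) auto

definition Ssum :: "nat \<Rightarrow> nat \<Rightarrow> nat" where
  "Ssum A h = (\<Sum>j<h. A ^ j)"

lemma Ssum_Suc: "Ssum A (Suc h) = A * Ssum A h + 1"
proof -
  have "(\<Sum>j<Suc h. A ^ j) = A ^ 0 + (\<Sum>j<h. A ^ Suc j)" by (rule sum.lessThan_Suc_shift)
  also have "\<dots> = 1 + A * (\<Sum>j<h. A ^ j)" by (simp add: sum_distrib_left)
  finally show ?thesis by (simp add: Ssum_def)
qed

lemma Ssum_0[simp]: "Ssum A 0 = 0"
  by (simp add: Ssum_def)

lemma lv_le_iff: "1 \<le> A \<Longrightarrow> lv A n \<le> h \<longleftrightarrow> n < Ssum A h"
proof (induction n arbitrary: h rule: less_induct)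
  case (less n)
  show ?case
  proof (cases h)
    case 0 then show ?thesis using lv_ge1[of A n] by simp
  next
    case (Suc k)
    show ?thesis
    proof (cases "n = 0")
      case True then show ?thesis using Suc by (simp add: Ssum_Suc)
    next
      case False
      have lvn: "lv A n = Suc (lv A ((n - 1) div A))"
        using False by (subst lv.simps) simp
      have "(n - 1) div A < n" using False by (meson div_le_dividend le_less_trans diff_less zero_less_one neq0_conv)
      then have ih: "lv A ((n - 1) div A) \<le> k \<longleftrightarrow> (n - 1) div A < Ssum A k"
        using less by blast
      have "(n - 1) div A < Ssum A k \<longleftrightarrow> n - 1 < A * Ssum A k"
        using less.prems by (simp add: div_less_iff_less_mult mult.commute)
      then show ?thesis using lvn ih Suc False by (auto simp add: Ssum_Suc)
    qed
  qed
qed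

definition enc :: "nat \<Rightarrow> nat list \<Rightarrow> nat" where
  "enc A xs = foldl (\<lambda>n a. A * n + a + 1) 0 xs"

lemma enc_Nil[simp]: "enc A [] = 0" by (simp add: enc_def)
lemma enc_snoc[simp]: "enc A (xs @ [a]) = A * enc A xs + a + 1" by (simp add: enc_def)

lemma lv_enc: "set xs \<subseteq> {..<A} \<Longrightarrow> lv A (enc A xs) = Suc (length xs)"
  by (induction xs rule: rev_induct) auto

lemma enc_inj: "length xs = length ys \<Longrightarrow> set xs \<subseteq> {..<A} \<Longrightarrow> set ys \<subseteq> {..<A}
   \<Longrightarrow> enc A xs = enc A ys \<Longrightarrow> xs = ys"
proof (induction xs arbitrary: ys rule: rev_induct)
  case Nil then show ?case by simp
next
  case (snoc a xs)
  then obtain ys' b where ys: "ys = ys' @ [b]" by (metis length_0_conv list.distinct(1) rev_exhaust length_append_singleton)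
  have ab: "a < A" "b < A" using snoc.prems ys by auto
  have eq: "A * enc A xs + a = A * enc A ys' + b" using snoc.prems ys by simp
  have "(A * enc A xs + a) mod A = a" "(A * enc A ys' + b) mod A = b" using ab by auto
  then have "a = b" using eq by simp
  then have "enc A xs = enc A ys'" using eq ab by simp
  then show ?case using snoc ys \<open>a = b\<close> by auto
qed

lemma Ssum_mono_Suc: assumes "1 \<le> A" shows "Ssum A h < Ssum A (Suc h)"
proof -
  have "Ssum A h \<le> A * Ssum A h" using assms by simp
  from le_imp_less_Suc[OF this] show ?thesis by (simp add: Ssum_Suc)
qed

section \<open>The game\<close>

definition Rw :: "real \<Rightarrow> real pmf" where
  "Rw q = map_pmf (\<lambda>b. if b then 1 else 0) (bernoulli_pmf q)"

lemma set_Rw: "set_pmf (Rw q) \<subseteq> {0, 1}"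
  by (auto simp: Rw_def)

definition mkG :: "nat \<Rightarrow> nat \<Rightarrow> nat \<Rightarrow> (nat \<times> nat \<Rightarrow> real) \<Rightarrow> game" where
  "mkG H A X \<theta> = \<lparr>hor = H, nact = A, infs = {..<X},
     lvl = (\<lambda>x. if x < Ssum A H then lv A x else H),
     par = (\<lambda>y. if y < Ssum A H then ((y - 1) div A, (y - 1) mod A) else (Ssum A (H - 2), 0)),
     init = return_pmf 0,
     trn = (\<lambda>x a. map_pmf (\<lambda>r. (r, Suc (A * x + a))) (Rw (\<theta> (x, a))))\<rparr>"

lemma mkG_simps[simp]: "hor (mkG H A X \<theta>) = H" "nact (mkG H A X \<theta>) = A"
  "infs (mkG H A X \<theta>) = {..<X}" "init (mkG H A X \<theta>) = return_pmf 0"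
  "trn (mkG H A X \<theta>) = (\<lambda>x a. map_pmf (\<lambda>r. (r, Suc (A * x + a))) (Rw (\<theta> (x, a))))"
  by (simp_all add: mkG_def)

lemma wf_mkG:
  assumes A: "2 \<le> A" and H: "1 \<le> H" and X: "Ssum A H \<le> X"
  shows "wf_game (mkG H A X \<theta>)"
proof -
  let ?S = "Ssum A H"
  define G where "G = mkG H A X \<theta>"
  have A1: "1 \<le> A" using A by simp
  have lvl: "lvl G x = (if x < ?S then lv A x else H)" for x by (simp add: G_def mkG_def)
  have par: "par G y = (if y < ?S then ((y - 1) div A, (y - 1) mod A) else (Ssum A (H - 2), 0))" for y
    by (simp add: G_def mkG_def)
  have GG: "infs G = {..<X}" "nact G = A" "hor G = H" "init G = return_pmf 0"
    "trn G = (\<lambda>x a. map_pmf (\<lambda>r. (r, Suc (A * x + a))) (Rw (\<theta> (x, a))))" by (simp_all add: G_def)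
  have S0: "0 < ?S" using lv_le_iff[OF A1, of 0 H] H by simp
  have c1: "\<forall>x\<in>infs G. 1 \<le> lvl G x \<and> lvl G x \<le> H"
    using lv_ge1 lv_le_iff[OF A1] H by (auto simp: lvl GG)
  have c2: "set_pmf (init G) \<subseteq> {x\<in>infs G. lvl G x = 1}"
    using S0 X by (auto simp: GG lvl)
  have child: "Suc (A * x + a) < ?S \<and> lvl G (Suc (A * x + a)) = lvl G x + 1 \<and> par G (Suc (A * x + a)) = (x, a)"
    if "lvl G x < H" "a < A" for x a
  proof -
    have xs: "x < ?S" using that(1) by (auto simp: lvl split: if_splits)
    then have lx: "lv A x < H" using that(1) by (simp add: lvl)
    have "lv A (Suc (A * x + a)) \<le> H" using lx that(2) by simp
    then have ys: "Suc (A * x + a) < ?S" using lv_le_iff[OF A1] by blast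
    have "(A * x + a) div A = x" "(A * x + a) mod A = a" using that(2) by auto
    then show ?thesis using ys xs that(2) by (simp add: lvl par)
  qed
  have c3: "\<forall>y\<in>infs G. 2 \<le> lvl G y \<longrightarrow>
        fst (par G y) \<in> infs G \<and> lvl G (fst (par G y)) + 1 = lvl G y \<and> snd (par G y) < nact G"
  proof (intro ballI impI)
    fix y assume y: "y \<in> infs G" and l2: "2 \<le> lvl G y"
    show "fst (par G y) \<in> infs G \<and> lvl G (fst (par G y)) + 1 = lvl G y \<and> snd (par G y) < nact G"
    proof (cases "y < ?S")
      case True
      have "y \<noteq> 0"
      proof
        assume "y = 0" then show False using True l2 by (simp add: lvl)
      qed
      then have lvy: "lv A y = Suc (lv A ((y - 1) div A))" by (subst lv.simps) simp
      have lt: "(y - 1) div A < y" using \<open>y \<noteq> 0\<close>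
        by (meson div_le_dividend le_less_trans diff_less zero_less_one neq0_conv)
      then show ?thesis using True y lvy A by (auto simp: lvl par GG)
    next
      case False
      then have H2: "2 \<le> H" using l2 by (simp add: lvl)
      have a: "Ssum A (H - 2) < Ssum A (H - 1)" using Ssum_mono_Suc[OF A1, of "H - 2"] H2
        by (simp add: Suc_diff_Suc numeral_2_eq_2)
      have b: "Ssum A (H - 1) < ?S" using Ssum_mono_Suc[OF A1, of "H - 1"] H2 by simp
      have "lv A (Ssum A (H - 2)) \<le> H - 1" using lv_le_iff[OF A1] a by blast
      moreover have "\<not> lv A (Ssum A (H - 2)) \<le> H - 2" using lv_le_iff[OF A1] by blast
      ultimately have "lv A (Ssum A (H - 2)) = H - 1" by simp
      then show ?thesis using False a b H2 X y A by (auto simp: lvl par GG)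
    qed
  qed
  have c4: "\<forall>x\<in>infs G. \<forall>a<nact G. lvl G x < hor G \<longrightarrow>
        (\<exists>y\<in>infs G. lvl G y = lvl G x + 1 \<and> par G y = (x, a))"
    using child X by (force simp: GG)
  have c5: "\<forall>x\<in>infs G. \<forall>a<nact G. \<forall>(r, y)\<in>set_pmf (trn G x a).
        0 \<le> r \<and> r \<le> 1 \<and>
        (lvl G x < hor G \<longrightarrow> y \<in> infs G \<and> lvl G y = lvl G x + 1 \<and> par G y = (x, a))"
    using child X set_Rw by (fastforce simp: GG)
  show ?thesis unfolding wf_game_def G_def[symmetric]
    using c1 c2 c3 c4 c5 by (simp add: GG)
qed

lemma int_point: "(\<integral>y. (if y = c then v else 0) \<partial>measure_pmf M) = pmf M c * (v::real)"
  by (subst integral_measure_pmf_real[where A="{c}"]) (auto split: if_splits)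

lemma int_return: "(\<integral>y. f y \<partial>measure_pmf (return_pmf x)) = (f x :: real)"
  by (subst integral_measure_pmf_real[where A="{x}"]) auto

lemma int_bind:
  fixes f :: "'b \<Rightarrow> real"
  assumes fin: "finite (set_pmf M)" "\<And>x. x \<in> set_pmf M \<Longrightarrow> finite (set_pmf (N x))"
  shows "(\<integral>y. f y \<partial>bind_pmf M N) = (\<integral>x. (\<integral>y. f y \<partial>N x) \<partial>M)"
proof -
  let ?S = "\<Union>x\<in>set_pmf M. set_pmf (N x)"
  have finS: "finite ?S" using fin by auto
  have "(\<integral>y. f y \<partial>bind_pmf M N) = (\<Sum>y\<in>?S. f y * pmf (bind_pmf M N) y)"
    by (rule integral_measure_pmf_real) (use finS in auto)
  also have "\<dots> = (\<Sum>y\<in>?S. f y * (\<Sum>x\<in>set_pmf M. pmf (N x) y * pmf M x))"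
  proof (intro sum.cong refl)
    fix y
    have "pmf (bind_pmf M N) y = (\<integral>x. pmf (N x) y \<partial>M)" by (rule pmf_bind)
    also have "\<dots> = (\<Sum>x\<in>set_pmf M. pmf (N x) y * pmf M x)"
      by (rule integral_measure_pmf_real) (use fin in auto)
    finally show "f y * pmf (bind_pmf M N) y = f y * (\<Sum>x\<in>set_pmf M. pmf (N x) y * pmf M x)" by simp
  qed
  also have "\<dots> = (\<Sum>x\<in>set_pmf M. (\<Sum>y\<in>?S. f y * pmf (N x) y) * pmf M x)"
    by (simp add: sum_distrib_left sum_distrib_right sum.swap[of _ ?S] mult_ac)
  also have "\<dots> = (\<Sum>x\<in>set_pmf M. (\<integral>y. f y \<partial>N x) * pmf M x)"
  proof (intro sum.cong refl)
    fix x assume x: "x \<in> set_pmf M"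
    have "(\<integral>y. f y \<partial>N x) = (\<Sum>y\<in>?S. f y * pmf (N x) y)"
      by (rule integral_measure_pmf_real) (use finS x in auto)
    then show "(\<Sum>y\<in>?S. f y * pmf (N x) y) * pmf M x = (\<integral>y. f y \<partial>N x) * pmf M x" by simp
  qed
  also have "\<dots> = (\<integral>x. (\<integral>y. f y \<partial>N x) \<partial>M)"
    by (rule integral_measure_pmf_real[symmetric]) (use fin in auto)
  finally show ?thesis .
qed

lemma pmf_map_Cons: "pmf (map_pmf (Cons e) E) (e' # \<tau>) = (if e = e' then pmf E \<tau> else 0)"
proof (cases "e = e'")
  case True
  have "inj (Cons e)" by (simp add: inj_def)
  then show ?thesis using True by (simp add: pmf_map_inj')
next
  case False
  then have "e' # \<tau> \<notin> set_pmf (map_pmf (Cons e) E)" by auto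
  then show ?thesis using False by (simp add: pmf_eq_0_set_pmf)
qed

lemma pmf_Rw: "0 \<le> q \<Longrightarrow> q \<le> 1 \<Longrightarrow>
  pmf (Rw q) r = (if r = 1 then q else if r = 0 then 1 - q else 0)"
proof -
  assume q: "0 \<le> q" "q \<le> 1"
  define f :: "bool \<Rightarrow> real" where "f = (\<lambda>b. if b then 1 else 0)"
  have inj: "inj f" by (simp add: inj_def f_def)
  have Rw: "Rw q = map_pmf f (bernoulli_pmf q)" by (simp add: Rw_def f_def)
  show ?thesis
  proof (cases "r = 1 \<or> r = 0")
    case True
    then show ?thesis
    proof
      assume r: "r = 1"
      have "pmf (map_pmf f (bernoulli_pmf q)) (f True) = q" using q by (simp add: pmf_map_inj'[OF inj])
      moreover have "f True = 1" by (simp add: f_def)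
      ultimately show ?thesis using r by (simp add: Rw)
    next
      assume r: "r = 0"
      have "pmf (map_pmf f (bernoulli_pmf q)) (f False) = 1 - q" using q by (simp add: pmf_map_inj'[OF inj])
      moreover have "f False = 0" by (simp add: f_def)
      ultimately show ?thesis using r by (simp add: Rw)
    qed
  next
    case False
    then have "r \<notin> set_pmf (Rw q)" using set_Rw by blast
    then show ?thesis using False by (simp add: pmf_eq_0_set_pmf)
  qed
qed

lemma int_Rw: "0 \<le> q \<Longrightarrow> q \<le> 1 \<Longrightarrow> (\<integral>r. g r \<partial>measure_pmf (Rw q)) = g 1 * q + g 0 * (1 - q)"
  by (simp add: Rw_def)

lemma finite_Rw[simp]: "finite (set_pmf (Rw q))"
  using set_Rw finite_subset by blast

lemma ep_mkG: "ep (mkG H A X \<theta>) \<mu> (Suc n) x = bind_pmf (\<mu> x) (\<lambda>a. bind_pmf (Rw (\<theta> (x, a)))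
   (\<lambda>r. map_pmf (Cons (x, a, r)) (ep (mkG H A X \<theta>) \<mu> n (Suc (A * x + a)))))"
  by (simp add: bind_map_pmf)

lemma episode_mkG: "episode (mkG H A X \<theta>) \<mu> = ep (mkG H A X \<theta>) \<mu> H 0"
  by (simp add: episode_def bind_return_pmf)

lemma finite_ep: "(\<And>x. finite (set_pmf (\<mu> x))) \<Longrightarrow> finite (set_pmf (ep (mkG H A X \<theta>) \<mu> n x))"
  by (induction n arbitrary: x) (auto simp: ep_mkG)

lemma pmf_ep_0: "pmf (ep G \<mu> 0 x) \<tau> = (if \<tau> = [] then 1 else 0)"
  by simp

lemma pmf_ep_Suc_Nil: "pmf (ep G \<mu> (Suc n) x) [] = 0"
  by (auto simp: pmf_eq_0_set_pmf split: prod.splits)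

lemma pmf_ep_Suc_Cons:
  "pmf (ep (mkG H A X \<theta>) \<mu> (Suc n) x) ((x', a, r) # \<tau>) =
    (if x' = x then pmf (\<mu> x) a * pmf (Rw (\<theta> (x, a))) r * pmf (ep (mkG H A X \<theta>) \<mu> n (Suc (A * x + a))) \<tau> else 0)"
proof -
  let ?E = "\<lambda>b. ep (mkG H A X \<theta>) \<mu> n (Suc (A * x + b))"
  have inner: "pmf (bind_pmf (Rw (\<theta> (x, b))) (\<lambda>s. map_pmf (Cons (x, b, s)) (?E b))) ((x', a, r) # \<tau>)
     = (if b = a then pmf (Rw (\<theta> (x, b))) r * (if x = x' then pmf (?E b) \<tau> else 0) else 0)" for b
  proof -
    have "pmf (bind_pmf (Rw (\<theta> (x, b))) (\<lambda>s. map_pmf (Cons (x, b, s)) (?E b))) ((x', a, r) # \<tau>)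
       = (\<integral>s. (if s = r then (if x = x' \<and> b = a then pmf (?E b) \<tau> else 0) else 0) \<partial>Rw (\<theta> (x, b)))"
      unfolding pmf_bind by (intro Bochner_Integration.integral_cong refl) (auto simp: pmf_map_Cons)
    also have "\<dots> = pmf (Rw (\<theta> (x, b))) r * (if x = x' \<and> b = a then pmf (?E b) \<tau> else 0)"
      by (rule int_point)
    finally show ?thesis by auto
  qed
  have "pmf (ep (mkG H A X \<theta>) \<mu> (Suc n) x) ((x', a, r) # \<tau>) =
     (\<integral>b. (if b = a then pmf (Rw (\<theta> (x, b))) r * (if x = x' then pmf (?E b) \<tau> else 0) else 0) \<partial>\<mu> x)"
    unfolding ep_mkG pmf_bind[of "\<mu> x"] inner ..
  also have "\<dots> = pmf (\<mu> x) a * (pmf (Rw (\<theta> (x, a))) r * (if x = x' then pmf (?E a) \<tau> else 0))"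
    by (subst int_point[symmetric]) (intro Bochner_Integration.integral_cong refl, auto)
  finally show ?thesis by auto
qed

fun W :: "nat \<Rightarrow> (nat \<times> nat \<Rightarrow> real) \<Rightarrow> policy \<Rightarrow> nat \<Rightarrow> nat \<Rightarrow> real" where
  "W A \<phi> \<mu> 0 x = 0"
| "W A \<phi> \<mu> (Suc n) x = (\<integral>a. \<phi> (x, a) + W A \<phi> \<mu> n (Suc (A * x + a)) \<partial>\<mu> x)"

definition fsm :: "(nat \<times> nat \<Rightarrow> real) \<Rightarrow> traj \<Rightarrow> real" where
  "fsm \<phi> \<tau> = sum_list (map (\<lambda>(y, a, r). \<phi> (y, a)) \<tau>)"

definition rsum :: "traj \<Rightarrow> real" where
  "rsum \<tau> = sum_list (map (\<lambda>(x, a, r). r) \<tau>)"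

lemma fsm_Cons[simp]: "fsm \<phi> ((y, a, r) # \<tau>) = \<phi> (y, a) + fsm \<phi> \<tau>"
  by (simp add: fsm_def)
lemma rsum_Cons[simp]: "rsum ((y, a, r) # \<tau>) = r + rsum \<tau>"
  by (simp add: rsum_def)

lemma int_ep_Suc:
  fixes g :: "traj \<Rightarrow> real"
  assumes fin: "\<And>x. finite (set_pmf (\<mu> x))"
  shows "(\<integral>\<tau>. g \<tau> \<partial>ep (mkG H A X \<theta>) \<mu> (Suc n) x) =
    (\<integral>a. (\<integral>r. (\<integral>\<tau>. g ((x, a, r) # \<tau>) \<partial>ep (mkG H A X \<theta>) \<mu> n (Suc (A * x + a))) \<partial>Rw (\<theta> (x, a))) \<partial>\<mu> x)"
proof -
  have f1: "finite (set_pmf (ep (mkG H A X \<theta>) \<mu> n y))" for y using finite_ep[OF fin] .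
  show ?thesis
    unfolding ep_mkG
    by (subst int_bind) (auto simp: fin f1 int_bind intro!: Bochner_Integration.integral_cong)
qed

lemma E_fsm:
  assumes fin: "\<And>x. finite (set_pmf (\<mu> x))"
  shows "(\<integral>\<tau>. fsm \<phi> \<tau> \<partial>ep (mkG H A X \<theta>) \<mu> n x) = W A \<phi> \<mu> n x"
proof (induction n arbitrary: x)
  case 0 then show ?case by (simp add: fsm_def)
next
  case (Suc n)
  have f1: "finite (set_pmf (ep (mkG H A X \<theta>) \<mu> n y))" for y using finite_ep[OF fin] .
  have "(\<integral>\<tau>. fsm \<phi> ((x, a, r) # \<tau>) \<partial>ep (mkG H A X \<theta>) \<mu> n y) = \<phi> (x, a) + W A \<phi> \<mu> n y" for a r y
    using Suc.IH[of y] by (simp add: Bochner_Integration.integral_add integrable_measure_pmf_finite[OF f1])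
  then show ?case
    by (subst int_ep_Suc[OF fin]) simp
qed

lemma E_rsum:
  assumes fin: "\<And>x. finite (set_pmf (\<mu> x))" and th: "\<And>i. 0 \<le> \<theta> i \<and> \<theta> i \<le> 1"
  shows "(\<integral>\<tau>. rsum \<tau> \<partial>ep (mkG H A X \<theta>) \<mu> n x) = W A \<theta> \<mu> n x"
proof (induction n arbitrary: x)
  case 0 then show ?case by (simp add: rsum_def)
next
  case (Suc n)
  have f1: "finite (set_pmf (ep (mkG H A X \<theta>) \<mu> n y))" for y using finite_ep[OF fin] .
  have "(\<integral>\<tau>. rsum ((x, a, r) # \<tau>) \<partial>ep (mkG H A X \<theta>) \<mu> n y) = r + W A \<theta> \<mu> n y" for a r y
    using Suc.IH[of y] by (simp add: Bochner_Integration.integral_add integrable_measure_pmf_finite[OF f1])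
  moreover have "(\<integral>r. r + W A \<theta> \<mu> n y \<partial>Rw (\<theta> (x, a))) = \<theta> (x, a) + W A \<theta> \<mu> n y" for a y
    using th[of "(x, a)"] by (simp add: int_Rw algebra_simps)
  ultimately show ?case
    by (subst int_ep_Suc[OF fin]) simp
qed

lemma val_mkG:
  assumes fin: "\<And>x. finite (set_pmf (\<mu> x))" and th: "\<And>i. 0 \<le> \<theta> i \<and> \<theta> i \<le> 1"
  shows "val (mkG H A X \<theta>) \<mu> = W A \<theta> \<mu> H 0"
  using E_rsum[OF fin th] by (simp add: val_def episode_mkG rsum_def)

lemma set_ep_lv:
  assumes pol: "\<And>x. set_pmf (\<mu> x) \<subseteq> {..<A}"
  shows "\<tau> \<in> set_pmf (ep (mkG H A X \<theta>) \<mu> n x) \<Longrightarrow> map (\<lambda>(y, a, r). lv A y) \<tau> = [lv A x..<lv A x + n]"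
proof (induction n arbitrary: x \<tau>)
  case 0 then show ?case by simp
next
  case (Suc n)
  then obtain a r \<tau>' where \<tau>: "\<tau> = (x, a, r) # \<tau>'" and a: "a \<in> set_pmf (\<mu> x)"
    and \<tau>': "\<tau>' \<in> set_pmf (ep (mkG H A X \<theta>) \<mu> n (Suc (A * x + a)))"
    by (auto simp: ep_mkG)
  have "a < A" using a pol by auto
  then show ?case using Suc.IH[OF \<tau>'] \<tau> by (simp add: upt_conv_Cons)
qed

definition pr :: "nat \<Rightarrow> nat list \<Rightarrow> nat \<times> nat" where
  "pr A p = (enc A (butlast p), last p)"
definition PL :: "nat \<Rightarrow> nat \<Rightarrow> nat list set" where
  "PL A H = {p. set p \<subseteq> {..<A} \<and> length p = H}"
definition LS :: "nat \<Rightarrow> nat \<Rightarrow> (nat \<times> nat) set" where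
  "LS A H = pr A ` PL A H"

lemma finite_PL: "finite (PL A H)"
  unfolding PL_def using finite_lists_length_eq[of "{..<A}" H] by simp

lemma finite_LS: "finite (LS A H)"
  unfolding LS_def using finite_PL by simp

lemma LS_lv: assumes "1 \<le> H" "i \<in> LS A H" shows "lv A (fst i) = H"
proof -
  obtain p where p: "p \<in> PL A H" "i = pr A p" using assms(2) by (auto simp: LS_def)
  have "set (butlast p) \<subseteq> {..<A}" using p(1) by (auto simp: PL_def dest: in_set_butlastD)
  then show ?thesis using p assms(1) by (simp add: pr_def lv_enc PL_def)
qed

lemma card_LS: assumes "1 \<le> H" shows "card (LS A H) = A ^ H"
proof -
  have "inj_on (pr A) (PL A H)"
  proof (rule inj_onI)
    fix p q assume pq: "p \<in> PL A H" "q \<in> PL A H" "pr A p = pr A q"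
    have ne: "p \<noteq> []" "q \<noteq> []" using pq assms by (auto simp: PL_def)
    have "butlast p = butlast q"
      using pq by (intro enc_inj[of _ _ A]) (auto simp: PL_def pr_def dest: in_set_butlastD)
    moreover have "last p = last q" using pq by (simp add: pr_def)
    ultimately show "p = q" using ne by (metis append_butlast_last_id)
  qed
  then have "card (LS A H) = card (PL A H)" by (simp add: LS_def card_image)
  also have "\<dots> = A ^ H" unfolding PL_def using card_lists_length_eq[of "{..<A}" H] by simp
  finally show ?thesis .
qed

definition cI :: "(nat \<times> nat) set \<Rightarrow> traj \<Rightarrow> nat" where
  "cI I \<tau> = length (filter (\<lambda>(y, a, r). (y, a) \<in> I) \<tau>)"

lemma cI_Nil[simp]: "cI I [] = 0" by (simp add: cI_def)
lemma cI_Cons[simp]: "cI I ((y, a, r) # \<tau>) = (if (y, a) \<in> I then 1 else 0) + cI I \<tau>"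
  by (simp add: cI_def)

lemma cI_mono: "I \<subseteq> J \<Longrightarrow> cI I \<tau> \<le> cI J \<tau>"
  by (induction \<tau>) auto

lemma sum_cI: "finite I \<Longrightarrow> (\<Sum>i\<in>I. cI {i} \<tau>) = cI I \<tau>"
proof (induction \<tau>)
  case Nil then show ?case by simp
next
  case (Cons e \<tau>)
  obtain y a r where e: "e = (y, a, r)" by (cases e) auto
  have "(\<Sum>i\<in>I. cI {i} (e # \<tau>)) = (\<Sum>i\<in>I. (if (y, a) = i then 1 else 0)) + (\<Sum>i\<in>I. cI {i} \<tau>)"
    by (simp add: e sum.distrib)
  also have "\<dots> = (if (y, a) \<in> I then 1 else 0) + cI I \<tau>"
    using Cons by (simp add: sum.delta)
  finally show ?case by (simp add: e)
qed

lemma fsm_ind: "fsm (\<lambda>i. if i \<in> I then c else 0) \<tau> = c * real (cI I \<tau>)"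
  by (induction \<tau>) (auto simp: fsm_def cI_def algebra_simps)

lemma fsm_add: "fsm (\<lambda>i. f i + g i) \<tau> = fsm f \<tau> + fsm g \<tau>"
  by (induction \<tau>) (auto simp: fsm_def)

lemma fsm_mono: "(\<And>i. f i \<le> g i) \<Longrightarrow> fsm f \<tau> \<le> fsm g \<tau>"
  by (induction \<tau>) (auto simp: fsm_def intro: add_mono)

lemma length_filter_mono': "(\<And>x. x \<in> set xs \<Longrightarrow> P x \<Longrightarrow> Q x) \<Longrightarrow> length (filter P xs) \<le> length (filter Q xs)"
  by (induction xs) auto

lemma cI_LS_le1:
  assumes H: "1 \<le> H" and pol: "\<And>x. set_pmf (\<mu> x) \<subseteq> {..<A}"
    and \<tau>: "\<tau> \<in> set_pmf (ep (mkG H' A X \<theta>) \<mu> H 0)"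
  shows "cI (LS A H) \<tau> \<le> 1"
proof -
  have m: "map (\<lambda>(y, a, r). lv A y) \<tau> = [1..<1 + H]" using set_ep_lv[OF pol \<tau>] by simp
  have "cI (LS A H) \<tau> \<le> length (filter (\<lambda>(y, a, r). lv A y = H) \<tau>)"
    unfolding cI_def
  proof (rule length_filter_mono')
    fix e assume "(\<lambda>(y, a, r). (y, a) \<in> LS A H) e"
    then show "(\<lambda>(y, a, r). lv A y = H) e" using LS_lv[OF H] by (cases e) fastforce
  qed
  also have "\<dots> = length (filter (\<lambda>l. l = H) (map (\<lambda>(y, a, r). lv A y) \<tau>))"
    by (induction \<tau>) auto
  also have "\<dots> = length (filter (\<lambda>l. l = H) ([1..<H] @ [H]))"
    using H by (simp add: m)
  also have "\<dots> = 1" by simp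
  finally show ?thesis .
qed

definition pol :: "nat \<Rightarrow> nat list \<Rightarrow> policy" where
  "pol A p = (\<lambda>x. return_pmf (if lv A x - 1 < length p then p ! (lv A x - 1) else 0))"

lemma pol_policies: "set p \<subseteq> {..<A} \<Longrightarrow> 0 < A \<Longrightarrow> pol A p \<in> policies A"
  by (auto simp: policies_def pol_def) (meson lessThan_iff nth_mem subsetD)

lemma W_pol:
  assumes p: "set p \<subseteq> {..<A}"
  shows "k + n \<le> length p \<Longrightarrow> W A \<phi> (pol A p) n (enc A (take k p)) = (\<Sum>j\<in>{k..<k+n}. \<phi> (enc A (take j p), p ! j))"
proof (induction n arbitrary: k)
  case 0 then show ?case by simp
next
  case (Suc n)
  have kl: "k < length p" using Suc.prems by simp
  have st: "set (take k p) \<subseteq> {..<A}" using p by (meson order_trans set_take_subset)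
  have lvk: "lv A (enc A (take k p)) = Suc k" using lv_enc[OF st] kl by simp
  have pk: "p ! k < A" using nth_mem[OF kl] p by auto
  have nxt: "Suc (A * enc A (take k p) + p ! k) = enc A (take (Suc k) p)"
    using kl by (simp add: take_Suc_conv_app_nth)
  have "W A \<phi> (pol A p) (Suc n) (enc A (take k p)) = \<phi> (enc A (take k p), p ! k) + W A \<phi> (pol A p) n (enc A (take (Suc k) p))"
    using kl by (simp add: pol_def lvk int_return nxt)
  also have "\<dots> = \<phi> (enc A (take k p), p ! k) + (\<Sum>j\<in>{Suc k..<Suc k+n}. \<phi> (enc A (take j p), p ! j))"
    using Suc.IH[of "Suc k"] Suc.prems by simp
  also have "\<dots> = (\<Sum>j\<in>{k..<k+Suc n}. \<phi> (enc A (take j p), p ! j))"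
    by (simp add: sum.atLeast_Suc_lessThan)
  finally show ?case .
qed

lemma val_pol:
  assumes p: "p \<in> PL A H" and H: "1 \<le> H" and A: "0 < A"
    and th: "\<And>i. 0 \<le> \<theta> i \<and> \<theta> i \<le> 1" and th0: "\<And>y a. lv A y \<noteq> H \<Longrightarrow> \<theta> (y, a) = 0"
  shows "val (mkG H A X \<theta>) (pol A p) = \<theta> (pr A p)"
proof -
  have ps: "set p \<subseteq> {..<A}" and lp: "length p = H" using p by (auto simp: PL_def)
  have "val (mkG H A X \<theta>) (pol A p) = W A \<theta> (pol A p) H (enc A (take 0 p))"
    by (subst val_mkG) (auto simp: pol_def th)
  also have "\<dots> = (\<Sum>j\<in>{0..<H}. \<theta> (enc A (take j p), p ! j))"
    using W_pol[OF ps, of 0 H] lp by simp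
  also have "\<dots> = (\<Sum>j\<in>{0..<H - 1}. \<theta> (enc A (take j p), p ! j)) + \<theta> (enc A (take (H - 1) p), p ! (H - 1))"
  proof -
    have "{0..<H} = {0..<Suc (H - 1)}" using H by simp
    then show ?thesis by (simp only: sum.atLeastLessThan_Suc)
  qed
  also have "(\<Sum>j\<in>{0..<H - 1}. \<theta> (enc A (take j p), p ! j)) = 0"
  proof (intro sum.neutral ballI)
    fix j assume j: "j \<in> {0..<H - 1}"
    have st: "set (take j p) \<subseteq> {..<A}" using ps by (meson order_trans set_take_subset)
    have "lv A (enc A (take j p)) = Suc j" using lv_enc[OF st] j lp by simp
    then show "\<theta> (enc A (take j p), p ! j) = 0" using j by (intro th0) simp
  qed
  also have "enc A (take (H - 1) p) = enc A (butlast p)" using lp by (simp add: butlast_conv_take)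
  also have "p ! (H - 1) = last p" using lp H by (subst last_conv_nth) auto
  finally show ?thesis by (simp add: pr_def)
qed

lemma pmf_hist_Suc:
  "pmf (hist G alg (Suc t)) z = (if z = [] then 0 else
     pmf (hist G alg t) (butlast z) * pmf (episode G (alg (butlast z))) (last z))"
proof -
  have inner: "pmf (map_pmf (\<lambda>\<tau>. hs @ [\<tau>]) (episode G (alg hs))) z =
     (if hs = butlast z \<and> z \<noteq> [] then pmf (episode G (alg (butlast z))) (last z) else 0)" for hs
  proof (cases "hs = butlast z \<and> z \<noteq> []")
    case True
    have inj: "inj (\<lambda>\<tau>. hs @ [\<tau>])" by (simp add: inj_def)
    have "z = hs @ [last z]" using True by simp
    then have "pmf (map_pmf (\<lambda>\<tau>. hs @ [\<tau>]) (episode G (alg hs))) z = pmf (episode G (alg hs)) (last z)"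
      using pmf_map_inj'[OF inj] by metis
    then show ?thesis using True by simp
  next
    case False
    then have "z \<notin> set_pmf (map_pmf (\<lambda>\<tau>. hs @ [\<tau>]) (episode G (alg hs)))" by auto
    then have "pmf (map_pmf (\<lambda>\<tau>. hs @ [\<tau>]) (episode G (alg hs))) z = 0" by (simp add: pmf_eq_0_set_pmf)
    then show ?thesis by (subst if_not_P[OF False])
  qed
  have "pmf (hist G alg (Suc t)) z = (\<integral>hs. (if hs = butlast z then (if z \<noteq> [] then pmf (episode G (alg (butlast z))) (last z) else 0) else 0) \<partial>hist G alg t)"
    by (simp add: pmf_bind inner)
  also have "\<dots> = pmf (hist G alg t) (butlast z) * (if z \<noteq> [] then pmf (episode G (alg (butlast z))) (last z) else 0)"
    by (rule int_point)
  finally show ?thesis by auto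
qed

lemma set_hist:
  "hs \<in> set_pmf (hist G alg t) \<Longrightarrow> length hs = t \<and> (\<forall>k<t. hs ! k \<in> set_pmf (episode G (alg (take k hs))))"
proof (induction t arbitrary: hs)
  case 0 then show ?case by simp
next
  case (Suc t)
  then obtain hs' \<tau> where hs: "hs = hs' @ [\<tau>]" and h': "hs' \<in> set_pmf (hist G alg t)"
    and \<tau>: "\<tau> \<in> set_pmf (episode G (alg hs'))" by auto
  have IH: "length hs' = t" "\<forall>k<t. hs' ! k \<in> set_pmf (episode G (alg (take k hs')))" using Suc.IH[OF h'] by auto
  show ?case
  proof (intro conjI allI impI)
    show "length hs = Suc t" using hs IH by simp
    fix k assume k: "k < Suc t"
    show "hs ! k \<in> set_pmf (episode G (alg (take k hs)))"
    proof (cases "k < t")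
      case True then show ?thesis using IH hs by (simp add: nth_append)
    next
      case False then have "k = t" using k by simp
      moreover have "hs ! t = \<tau>" "take t hs = hs'" using hs IH(1) by auto
      ultimately show ?thesis using \<tau> by simp
    qed
  qed
qed

lemma finite_hist:
  assumes "\<And>hs. finite (set_pmf (episode G (alg hs)))"
  shows "finite (set_pmf (hist G alg t))"
  by (induction t) (auto simp: assms)

section \<open>Change of measure\<close>

lemma ep_com:
  assumes R: "\<And>i r. pmf (Rw (\<theta>0 i)) r ^ 2 \<le> \<rho> ^ (if i = j then 1 else 0) * pmf (Rw (\<theta>1 i)) r * pmf (Rw (\<theta>2 i)) r"
    and rho: "0 \<le> \<rho>"
  shows "pmf (ep (mkG H A X \<theta>0) \<mu> n x) \<tau> ^ 2 \<le> \<rho> ^ cI {j} \<tau> * pmf (ep (mkG H A X \<theta>1) \<mu> n x) \<tau> * pmf (ep (mkG H A X \<theta>2) \<mu> n x) \<tau>"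
proof (induction n arbitrary: x \<tau>)
  case 0 then show ?case by (cases "\<tau> = []") (auto simp: indicator_def)
next
  case (Suc n)
  show ?case
  proof (cases \<tau>)
    case Nil then show ?thesis by (simp only: pmf_ep_Suc_Nil) simp
  next
    case (Cons e \<tau>')
    obtain x' a r where e: "e = (x', a, r)" by (cases e) auto
    show ?thesis
    proof (cases "x' = x")
      case False then show ?thesis by (simp add: Cons e pmf_ep_Suc_Cons del: ep.simps)
    next
      case True
      let ?y = "Suc (A * x + a)"
      define m where "m = pmf (\<mu> x) a"
      define p0 where "p0 = pmf (Rw (\<theta>0 (x, a))) r"
      define p1 where "p1 = pmf (Rw (\<theta>1 (x, a))) r"
      define p2 where "p2 = pmf (Rw (\<theta>2 (x, a))) r"
      define e0 where "e0 = pmf (ep (mkG H A X \<theta>0) \<mu> n ?y) \<tau>'"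
      define e1 where "e1 = pmf (ep (mkG H A X \<theta>1) \<mu> n ?y) \<tau>'"
      define e2 where "e2 = pmf (ep (mkG H A X \<theta>2) \<mu> n ?y) \<tau>'"
      define b where "b = (if (x, a) = j then 1 else 0 :: nat)"
      have hp: "p0 ^ 2 \<le> \<rho> ^ b * p1 * p2" using R[of "(x, a)" r] by (simp add: p0_def p1_def p2_def b_def)
      have he: "e0 ^ 2 \<le> \<rho> ^ cI {j} \<tau>' * e1 * e2" using Suc.IH[of ?y \<tau>'] by (simp add: e0_def e1_def e2_def)
      have nn: "0 \<le> m" "0 \<le> p1" "0 \<le> p2" "0 \<le> e1" "0 \<le> e2"
        by (simp_all add: m_def p1_def p2_def e1_def e2_def)
      have "(m * p0 * e0) ^ 2 = m ^ 2 * (p0 ^ 2 * e0 ^ 2)" by (simp add: power_mult_distrib)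
      also have "\<dots> \<le> m ^ 2 * ((\<rho> ^ b * p1 * p2) * (\<rho> ^ cI {j} \<tau>' * e1 * e2))"
        by (intro mult_left_mono mult_mono hp he) (use nn rho in auto)
      also have "\<dots> = \<rho> ^ (b + cI {j} \<tau>') * (m * p1 * e1) * (m * p2 * e2)"
        by (simp add: power_add power2_eq_square)
      finally have "(m * p0 * e0) ^ 2 \<le> \<rho> ^ (b + cI {j} \<tau>') * (m * p1 * e1) * (m * p2 * e2)" .
      then show ?thesis
        by (simp add: Cons e True pmf_ep_Suc_Cons m_def p0_def p1_def p2_def e0_def e1_def e2_def b_def
             del: ep.simps)
    qed
  qed
qed

definition Ncnt :: "(nat \<times> nat) \<Rightarrow> traj list \<Rightarrow> nat" where
  "Ncnt j hs = sum_list (map (cI {j}) hs)"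

lemma hist_com:
  assumes R: "\<And>i r. pmf (Rw (\<theta>0 i)) r ^ 2 \<le> \<rho> ^ (if i = j then 1 else 0) * pmf (Rw (\<theta>1 i)) r * pmf (Rw (\<theta>2 i)) r"
    and rho: "0 \<le> \<rho>"
  shows "pmf (hist (mkG H A X \<theta>0) alg t) z ^ 2 \<le> \<rho> ^ Ncnt j z * pmf (hist (mkG H A X \<theta>1) alg t) z * pmf (hist (mkG H A X \<theta>2) alg t) z"
proof (induction t arbitrary: z)
  case 0 then show ?case by (cases "z = []") (auto simp: Ncnt_def indicator_def)
next
  case (Suc t)
  show ?case
  proof (cases "z = []")
    case True then show ?thesis by (simp add: pmf_hist_Suc del: hist.simps)
  next
    case False
    define h0 where "h0 = pmf (hist (mkG H A X \<theta>0) alg t) (butlast z)"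
    define h1 where "h1 = pmf (hist (mkG H A X \<theta>1) alg t) (butlast z)"
    define h2 where "h2 = pmf (hist (mkG H A X \<theta>2) alg t) (butlast z)"
    define e0 where "e0 = pmf (episode (mkG H A X \<theta>0) (alg (butlast z))) (last z)"
    define e1 where "e1 = pmf (episode (mkG H A X \<theta>1) (alg (butlast z))) (last z)"
    define e2 where "e2 = pmf (episode (mkG H A X \<theta>2) (alg (butlast z))) (last z)"
    have hh: "h0 ^ 2 \<le> \<rho> ^ Ncnt j (butlast z) * h1 * h2" using Suc.IH by (simp add: h0_def h1_def h2_def)
    have he: "e0 ^ 2 \<le> \<rho> ^ cI {j} (last z) * e1 * e2"
      unfolding e0_def e1_def e2_def episode_mkG by (rule ep_com[OF R rho])
    have nn: "0 \<le> h1" "0 \<le> h2" "0 \<le> e1" "0 \<le> e2" by (simp_all add: h1_def h2_def e1_def e2_def)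
    have Nz: "Ncnt j z = Ncnt j (butlast z) + cI {j} (last z)"
    proof -
      have "z = butlast z @ [last z]" using False by simp
      then have "Ncnt j z = Ncnt j (butlast z @ [last z])" by simp
      then show ?thesis by (simp add: Ncnt_def)
    qed
    have "(h0 * e0) ^ 2 = h0 ^ 2 * e0 ^ 2" by (simp add: power_mult_distrib)
    also have "\<dots> \<le> (\<rho> ^ Ncnt j (butlast z) * h1 * h2) * (\<rho> ^ cI {j} (last z) * e1 * e2)"
      by (intro mult_mono hh he) (use nn rho in auto)
    also have "\<dots> = \<rho> ^ Ncnt j z * (h1 * e1) * (h2 * e2)"
      by (simp add: Nz power_add)
    finally show ?thesis
      using False by (simp add: pmf_hist_Suc h0_def h1_def h2_def e0_def e1_def e2_def del: hist.simps)
  qed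
qed

lemma amgm_aux:
  fixes p q q2 R l :: real
  assumes "0 \<le> p" "0 \<le> q" "0 \<le> q2" "0 < R" "0 < l" "p ^ 2 \<le> R * q * q2"
  shows "2 * p \<le> R * l * q + q2 / l"
proof -
  define u where "u = R * l * q"
  define v where "v = q2 / l"
  have uv: "u * v = R * q * q2" using assms by (simp add: u_def v_def)
  have nn: "0 \<le> u" "0 \<le> v" using assms by (simp_all add: u_def v_def)
  have "0 \<le> (u - v) ^ 2" by simp
  then have "4 * (u * v) \<le> (u + v) ^ 2" by (simp add: power2_eq_square algebra_simps)
  moreover have "(2 * p) ^ 2 = 4 * p ^ 2" by (simp add: power_mult_distrib)
  ultimately have "(2 * p) ^ 2 \<le> (u + v) ^ 2" using assms(6) uv by linarith
  moreover have "0 \<le> u + v" using nn by simp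
  ultimately have "2 * p \<le> u + v" by (rule power2_le_imp_le)
  then show ?thesis by (simp add: u_def v_def)
qed

lemma com_prob:
  fixes P Q Q2 :: "'a pmf"
  assumes fin: "finite (set_pmf P)" and rho: "1 \<le> \<rho>"
    and pt: "\<And>z. pmf P z ^ 2 \<le> \<rho> ^ N z * pmf Q z * pmf Q2 z"
    and NF: "\<And>z. z \<in> F \<Longrightarrow> N z \<le> m"
  shows "measure_pmf.prob P F ^ 2 \<le> \<rho> ^ m * measure_pmf.prob Q F"
proof -
  define D where "D = F \<inter> set_pmf P"
  define R where "R = \<rho> ^ m"
  have R0: "0 < R" using rho by (simp add: R_def)
  have finD: "finite D" using fin by (simp add: D_def)
  have PF: "measure_pmf.prob P F = (\<Sum>z\<in>D. pmf P z)"
    using measure_Int_set_pmf[of P F] measure_measure_pmf_finite[OF finD, of P] by (simp add: D_def)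
  have QD: "(\<Sum>z\<in>D. pmf Q z) \<le> measure_pmf.prob Q F"
    using measure_measure_pmf_finite[OF finD, of Q] measure_pmf.finite_measure_mono[of D F Q]
    by (simp add: D_def)
  have Q2D: "(\<Sum>z\<in>D. pmf Q2 z) \<le> 1"
    using measure_measure_pmf_finite[OF finD, of Q2] measure_pmf.prob_le_1[of Q2 D] by simp
  have ptR: "pmf P z ^ 2 \<le> R * pmf Q z * pmf Q2 z" if "z \<in> D" for z
  proof -
    have "\<rho> ^ N z \<le> R" unfolding R_def using NF[of z] that rho by (intro power_increasing) (auto simp: D_def)
    then have "\<rho> ^ N z * (pmf Q z * pmf Q2 z) \<le> R * (pmf Q z * pmf Q2 z)" by (intro mult_right_mono) auto
    then show ?thesis using pt[of z] by (simp add: mult.assoc)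
  qed
  have bound: "2 * measure_pmf.prob P F \<le> R * l * measure_pmf.prob Q F + 1 / l" if l: "0 < l" for l
  proof -
    have "2 * measure_pmf.prob P F = (\<Sum>z\<in>D. 2 * pmf P z)" by (simp add: PF sum_distrib_left)
    also have "\<dots> \<le> (\<Sum>z\<in>D. R * l * pmf Q z + pmf Q2 z / l)"
    proof (rule sum_mono)
      fix z assume z: "z \<in> D"
      show "2 * pmf P z \<le> R * l * pmf Q z + pmf Q2 z / l"
        by (rule amgm_aux[OF _ _ _ R0 l ptR[OF z]]) auto
    qed
    also have "\<dots> = R * l * (\<Sum>z\<in>D. pmf Q z) + (\<Sum>z\<in>D. pmf Q2 z) / l"
      by (simp add: sum.distrib sum_distrib_left sum_divide_distrib)
    also have "\<dots> \<le> R * l * measure_pmf.prob Q F + 1 / l"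
    proof (rule add_mono)
      show "R * l * (\<Sum>z\<in>D. pmf Q z) \<le> R * l * measure_pmf.prob Q F"
        using QD R0 l by (intro mult_left_mono) auto
      show "(\<Sum>z\<in>D. pmf Q2 z) / l \<le> 1 / l"
        using Q2D l by (intro divide_right_mono) auto
    qed
    finally show ?thesis .
  qed
  define a where "a = measure_pmf.prob Q F"
  define pF where "pF = measure_pmf.prob P F"
  have a0: "0 \<le> a" and p0: "0 \<le> pF" by (simp_all add: a_def pF_def)
  show ?thesis
  proof (cases "a = 0")
    case True
    show ?thesis
    proof (cases "pF = 0")
      case True then show ?thesis using rho by (simp add: pF_def a_def)
    next
      case False
      then have "0 < pF" using p0 by simp
      have "2 * pF \<le> 1 / (1 / pF)" using bound[of "1 / pF"] \<open>0 < pF\<close> True by (simp add: a_def pF_def)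
      then show ?thesis using \<open>0 < pF\<close> by simp
    qed
  next
    case False
    then have apos: "0 < a" using a0 by simp
    define s where "s = sqrt (R * a)"
    have s0: "0 < s" using R0 apos by (simp add: s_def)
    have ss: "s * s = R * a" using R0 apos by (simp add: s_def)
    have "2 * pF \<le> R * (1 / s) * a + 1 / (1 / s)" using bound[of "1 / s"] s0 by (simp add: a_def pF_def)
    also have "R * (1 / s) * a = s" using ss s0 by (simp add: field_simps)
    finally have "pF \<le> s" using s0 by simp
    then have "pF ^ 2 \<le> s ^ 2" using p0 by (intro power_mono) auto
    then show ?thesis using ss by (simp add: power2_eq_square pF_def a_def R_def)
  qed
qed


lemma prob_sum_bound:
  fixes M :: "'a pmf" and B :: "'i \<Rightarrow> 'a set"
  assumes fin: "finite (set_pmf M)" and I: "finite I"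
    and pt: "\<And>z. z \<in> set_pmf M \<Longrightarrow> (\<Sum>i\<in>I. indicator (B i) z) \<le> (c::real)"
  shows "(\<Sum>i\<in>I. measure_pmf.prob M (B i)) \<le> c"
proof -
  let ?S = "set_pmf M"
  have pr: "measure_pmf.prob M C = (\<Sum>z\<in>?S. pmf M z * indicator C z)" for C
  proof -
    have "measure_pmf.prob M C = measure_pmf.prob M (?S \<inter> C)"
      using measure_Int_set_pmf[of M C] by (simp add: Int_commute)
    also have "\<dots> = (\<Sum>z\<in>?S \<inter> C. pmf M z)" using fin by (simp add: measure_measure_pmf_finite)
    also have "\<dots> = (\<Sum>z\<in>?S. pmf M z * indicator C z)"
      using fin by (simp add: sum.inter_restrict indicator_def if_distrib cong: if_cong)
    finally show ?thesis .
  qed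
  have "(\<Sum>i\<in>I. measure_pmf.prob M (B i)) = (\<Sum>z\<in>?S. pmf M z * (\<Sum>i\<in>I. indicator (B i) z))"
    by (simp add: pr sum_distrib_left sum.swap[of _ I])
  also have "\<dots> \<le> (\<Sum>z\<in>?S. pmf M z * c)"
    by (intro sum_mono mult_left_mono pt) auto
  also have "\<dots> = c" using sum_pmf_eq_1[OF fin, of M] by (simp add: sum_distrib_right[symmetric])
  finally show ?thesis .
qed

lemma exists_le_avg:
  fixes f :: "'i \<Rightarrow> real"
  assumes "finite I" "I \<noteq> {}" "(\<Sum>i\<in>I. f i) \<le> c"
  shows "\<exists>i\<in>I. f i \<le> c / card I"
proof (rule ccontr)
  assume "\<not> ?thesis"
  then have "\<And>i. i \<in> I \<Longrightarrow> c / card I < f i" by auto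
  then have "(\<Sum>i\<in>I. c / card I) < (\<Sum>i\<in>I. f i)" using assms by (intro sum_strict_mono) auto
  then have "c < (\<Sum>i\<in>I. f i)" using assms by simp
  then show False using assms by simp
qed

lemma Ncnt_sum: "finite I \<Longrightarrow> (\<Sum>i\<in>I. Ncnt i hs) = sum_list (map (cI I) hs)"
  by (induction hs) (auto simp: Ncnt_def sum.distrib sum_cI)

lemma sumlist_le: "(\<And>x. x \<in> set xs \<Longrightarrow> f x \<le> (1::nat)) \<Longrightarrow> sum_list (map f xs) \<le> length xs"
proof (induction xs)
  case Nil then show ?case by simp
next
  case (Cons a xs)
  then have "f a \<le> 1" "sum_list (map f xs) \<le> length xs" by auto
  then show ?case by simp
qed

lemma num_bound:
  fixes K T L AX :: real
  assumes K: "2 \<le> K" and T: "0 < T" and L: "0 < L" and AX: "0 \<le> AX" "AX \<le> 4 * K"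
    and TL: "0.4 * (2 * K) * L \<le> T"
  shows "1/64 * sqrt (T * AX * L) \<le> min (1/8) (sqrt (L * (K - 1) / (128 * T))) * T / 2"
proof -
  define s where "s = sqrt (L * (K - 1) / (128 * T))"
  have s0: "0 \<le> s" using K L T by (simp add: s_def)
  have ss: "s ^ 2 = L * (K - 1) / (128 * T)" using K L T by (simp add: s_def)
  have x0: "0 \<le> T * AX * L" using T AX L by simp
  have base: "T * AX * L \<le> T * (4 * K) * L"
  proof -
    have "T * AX \<le> T * (4 * K)" using AX T by (simp add: mult_left_mono)
    then show ?thesis using L by (simp add: mult_right_mono)
  qed
  have b1: "1/64 * sqrt (T * AX * L) \<le> T / 16"
  proof -
    have "4 * K * L \<le> 16 * T" using TL T by linarith
    then have "T * (4 * K * L) \<le> T * (16 * T)" using T by (intro mult_left_mono) auto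
    then have "T * (4 * K) * L \<le> T * (16 * T)" by (simp add: mult_ac)
    then have "T * AX * L \<le> T * (16 * T)" using base by (rule order_trans[rotated])
    moreover have "(4 * T) ^ 2 = T * (16 * T)" by (simp add: power2_eq_square)
    ultimately have "T * AX * L \<le> (4 * T) ^ 2" by simp
    then have "sqrt (T * AX * L) \<le> 4 * T" using T by (simp add: real_sqrt_le_iff real_le_lsqrt)
    then show ?thesis by simp
  qed
  have b2: "1/64 * sqrt (T * AX * L) \<le> s * T / 2"
  proof (rule power2_le_imp_le)
    show "0 \<le> s * T / 2" using s0 T by simp
    have "(1/64 * sqrt (T * AX * L)) ^ 2 = T * AX * L / 4096" using x0 by (simp add: power_mult_distrib power_divide)
    also have "\<dots> \<le> T * (4 * K) * L / 4096" by (rule divide_right_mono[OF base]) simp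
    also have "\<dots> \<le> T * (8 * (K - 1)) * L / 4096"
    proof -
      have "T * (4 * K) \<le> T * (8 * (K - 1))" using K T by (simp add: mult_left_mono)
      then have "T * (4 * K) * L \<le> T * (8 * (K - 1)) * L" using L by (simp add: mult_right_mono)
      then show ?thesis by (rule divide_right_mono) simp
    qed
    also have "\<dots> = s ^ 2 * T ^ 2 / 4" unfolding ss using T by (simp add: power2_eq_square field_simps)
    also have "\<dots> = (s * T / 2) ^ 2" by (simp add: power_mult_distrib power_divide)
    finally show "(1/64 * sqrt (T * AX * L)) ^ 2 \<le> (s * T / 2) ^ 2" .
  qed
  show ?thesis using b1 b2 unfolding s_def[symmetric] by (auto simp: min_def)
qed

lemma num_m:
  fixes K T L D :: real and m :: nat
  assumes dl: "0 < \<delta>" "\<delta> < 1/4" and Ld: "L = ln (1 / (4 * \<delta>))" and T: "0 < T" and K: "2 \<le> K"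
    and Dd: "D = min (1/8) (sqrt (L * (K - 1) / (128 * T)))" and m: "real m \<le> 4 * T / (K - 1)"
  shows "4 * \<delta> \<le> (1 - 16 * D\<^sup>2) ^ m"
proof -
  have L: "0 < L" using dl by (simp add: Ld)
  have D0: "0 \<le> D" using L K T by (simp add: Dd)
  have D8: "D \<le> 1/8" by (simp add: Dd)
  have Ds: "D \<le> sqrt (L * (K - 1) / (128 * T))" by (simp add: Dd)
  have D2: "D\<^sup>2 \<le> L * (K - 1) / (128 * T)"
  proof -
    have "D\<^sup>2 \<le> (sqrt (L * (K - 1) / (128 * T)))\<^sup>2" using D0 Ds by (intro power_mono) auto
    also have "\<dots> = L * (K - 1) / (128 * T)" using L K T by simp
    finally show ?thesis .
  qed
  define x where "x = 16 * D\<^sup>2"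
  have x0: "0 \<le> x" by (simp add: x_def)
  have x4: "x \<le> 1/4"
  proof -
    have "D\<^sup>2 \<le> (1/8)\<^sup>2" using D0 D8 by (intro power_mono) auto
    then show ?thesis by (simp add: x_def power2_eq_square)
  qed
  have mx: "real m * x \<le> L / 2"
  proof -
    have "real m * x \<le> (4 * T / (K - 1)) * (16 * (L * (K - 1) / (128 * T)))"
    proof (rule mult_mono)
      show "x \<le> 16 * (L * (K - 1) / (128 * T))" using D2 by (simp add: x_def)
    qed (use m x0 T K in auto)
    also have "\<dots> = L / 2" using T K by (simp add: field_simps)
    finally show ?thesis .
  qed
  have lnb: "- 2 * x \<le> ln (1 - x)"
  proof -
    have "- x - 2 * x\<^sup>2 \<le> ln (1 - x)" using x0 x4 by (intro ln_one_minus_pos_lower_bound) auto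
    moreover have "2 * x\<^sup>2 \<le> x"
    proof -
      have "x * (2 * x) \<le> x * 1" using x0 x4 by (intro mult_left_mono) auto
      then show ?thesis by (simp add: power2_eq_square mult_ac)
    qed
    ultimately show ?thesis by linarith
  qed
  have pos: "0 < 1 - x" using x4 by simp
  have "- L \<le> real m * ln (1 - x)"
  proof -
    have "real m * (- 2 * x) \<le> real m * ln (1 - x)" using lnb by (intro mult_left_mono) auto
    then show ?thesis using mx by linarith
  qed
  then have "exp (- L) \<le> exp (real m * ln (1 - x))" by simp
  also have "exp (real m * ln (1 - x)) = (1 - x) ^ m"
    using pos by (simp add: exp_of_nat_mult)
  also have "exp (- L) = 4 * \<delta>" using dl by (simp add: Ld ln_div)
  finally show ?thesis by (simp add: x_def)
qed


section \<open>The hard instances\<close>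

locale LB =
  fixes A H X :: nat and D :: real
  assumes A2: "2 \<le> A" and H1: "1 \<le> H" and D0: "0 \<le> D" and D8: "D \<le> 1/8"
begin

definition LL :: "(nat \<times> nat) set" where "LL = LS A H"
definition l1 :: "nat \<times> nat" where "l1 = pr A (replicate H 0)"
definition th0 :: "nat \<times> nat \<Rightarrow> real" where
  "th0 i = (if i \<in> LL then 1/2 else 0) + (if i \<in> {l1} then D else 0)"
definition th1 :: "nat \<times> nat \<Rightarrow> nat \<times> nat \<Rightarrow> real" where
  "th1 j i = th0 i + (if i \<in> {j} then 2 * D else 0)"
definition th2 :: "nat \<times> nat \<Rightarrow> nat \<times> nat \<Rightarrow> real" where
  "th2 j i = th0 i - (if i \<in> {j} then 2 * D else 0)"
definition reach :: "policy \<Rightarrow> real" where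
  "reach \<mu> = W A (\<lambda>i. if i \<in> {l1} then 1 else 0) \<mu> H 0"

lemma rep_PL: "replicate H 0 \<in> PL A H"
  using A2 by (auto simp: PL_def)

lemma l1_LL: "l1 \<in> LL"
  using rep_PL by (simp add: l1_def LL_def LS_def)

lemma th0_range: "0 \<le> th0 i \<and> th0 i \<le> 1"
  using D0 D8 by (auto simp: th0_def)

lemma th1_range: "j \<in> LL \<Longrightarrow> j \<noteq> l1 \<Longrightarrow> 0 \<le> th1 j i \<and> th1 j i \<le> 1"
  using D0 D8 by (auto simp: th1_def th0_def)

lemma th2_range: "j \<in> LL \<Longrightarrow> j \<noteq> l1 \<Longrightarrow> 0 \<le> th2 j i \<and> th2 j i \<le> 1"
  using D0 D8 by (auto simp: th2_def th0_def)

lemma th0_LL: "th0 i \<le> (if i \<in> LL then 1 else 0)"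
  using D0 D8 l1_LL by (auto simp: th0_def)

lemma th1_LL: "j \<in> LL \<Longrightarrow> j \<noteq> l1 \<Longrightarrow> th1 j i \<le> (if i \<in> LL then 1 else 0)"
  using D0 D8 l1_LL by (auto simp: th1_def th0_def)

lemma notLL: "lv A y \<noteq> H \<Longrightarrow> (y, a) \<notin> LL"
  using LS_lv[OF H1] by (force simp: LL_def)

lemma th0_van: "lv A y \<noteq> H \<Longrightarrow> th0 (y, a) = 0"
  using notLL[of y a] l1_LL by (auto simp: th0_def)

lemma th1_van: "j \<in> LL \<Longrightarrow> lv A y \<noteq> H \<Longrightarrow> th1 j (y, a) = 0"
  using notLL[of y a] th0_van[of y a] by (auto simp: th1_def)

lemma pol_fin: "\<mu> \<in> policies A \<Longrightarrow> finite (set_pmf (\<mu> x))"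
  by (auto simp: policies_def intro: finite_subset)

lemma pol_sub: "\<mu> \<in> policies A \<Longrightarrow> set_pmf (\<mu> x) \<subseteq> {..<A}"
  by (auto simp: policies_def)

lemma finite_ep': "\<mu> \<in> policies A \<Longrightarrow> finite (set_pmf (ep (mkG H A X \<theta>) \<mu> n x))"
  using finite_ep[of \<mu>] pol_fin by blast

lemma cLL_le1: "\<mu> \<in> policies A \<Longrightarrow> \<tau> \<in> set_pmf (ep (mkG H A X \<theta>) \<mu> H 0) \<Longrightarrow> cI LL \<tau> \<le> 1"
  unfolding LL_def by (rule cI_LS_le1[OF H1]) (auto dest: pol_sub)

lemma val_eq:
  assumes "\<mu> \<in> policies A" "\<And>i. 0 \<le> \<theta> i \<and> \<theta> i \<le> 1"
  shows "val (mkG H A X \<theta>) \<mu> = (\<integral>\<tau>. fsm \<theta> \<tau> \<partial>ep (mkG H A X \<theta>) \<mu> H 0)"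
  using val_mkG[of \<mu> \<theta>] E_fsm[of \<mu>] assms pol_fin by metis

lemma reach_eq:
  assumes "\<mu> \<in> policies A"
  shows "reach \<mu> = (\<integral>\<tau>. real (cI {l1} \<tau>) \<partial>ep (mkG H A X \<theta>) \<mu> H 0)"
proof -
  have "reach \<mu> = (\<integral>\<tau>. fsm (\<lambda>i. if i \<in> {l1} then 1 else 0) \<tau> \<partial>ep (mkG H A X \<theta>) \<mu> H 0)"
    unfolding reach_def by (rule E_fsm[symmetric]) (use assms pol_fin in auto)
  then show ?thesis by (simp only: fsm_ind) simp
qed

lemma val_le1:
  assumes mu: "\<mu> \<in> policies A" and r: "\<And>i. 0 \<le> \<theta> i \<and> \<theta> i \<le> 1"
    and le: "\<And>i. \<theta> i \<le> (if i \<in> LL then 1 else 0)"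
  shows "val (mkG H A X \<theta>) \<mu> \<le> 1"
proof -
  have "val (mkG H A X \<theta>) \<mu> \<le> (\<integral>\<tau>. 1 \<partial>ep (mkG H A X \<theta>) \<mu> H 0)"
    unfolding val_eq[OF mu r]
  proof (rule integral_mono_AE)
    show "integrable (ep (mkG H A X \<theta>) \<mu> H 0) (fsm \<theta>)"
      by (rule integrable_measure_pmf_finite[OF finite_ep'[OF mu]])
    show "integrable (ep (mkG H A X \<theta>) \<mu> H 0) (\<lambda>\<tau>. 1::real)" by simp
    show "AE \<tau> in ep (mkG H A X \<theta>) \<mu> H 0. fsm \<theta> \<tau> \<le> 1"
    proof (subst AE_measure_pmf_iff, intro ballI)
      fix \<tau> assume \<tau>: "\<tau> \<in> set_pmf (ep (mkG H A X \<theta>) \<mu> H 0)"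
      have "fsm \<theta> \<tau> \<le> fsm (\<lambda>i. if i \<in> LL then 1 else 0) \<tau>" by (rule fsm_mono[OF le])
      also have "\<dots> = real (cI LL \<tau>)" by (simp add: fsm_ind)
      also have "\<dots> \<le> 1" using cLL_le1[OF mu \<tau>] by simp
      finally show "fsm \<theta> \<tau> \<le> 1" .
    qed
  qed
  then show ?thesis by simp
qed

lemma val0_le:
  assumes mu: "\<mu> \<in> policies A"
  shows "val (mkG H A X th0) \<mu> \<le> 1/2 + D * reach \<mu>"
proof -
  let ?E = "ep (mkG H A X th0) \<mu> H 0"
  have fin: "finite (set_pmf ?E)" by (rule finite_ep'[OF mu])
  have "val (mkG H A X th0) \<mu> \<le> (\<integral>\<tau>. 1/2 + D * real (cI {l1} \<tau>) \<partial>?E)"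
    unfolding val_eq[OF mu th0_range]
  proof (rule integral_mono_AE)
    show "integrable ?E (fsm th0)" by (rule integrable_measure_pmf_finite[OF fin])
    show "integrable ?E (\<lambda>\<tau>. 1/2 + D * real (cI {l1} \<tau>))" by (rule integrable_measure_pmf_finite[OF fin])
    show "AE \<tau> in ?E. fsm th0 \<tau> \<le> 1/2 + D * real (cI {l1} \<tau>)"
    proof (subst AE_measure_pmf_iff, intro ballI)
      fix \<tau> assume \<tau>: "\<tau> \<in> set_pmf ?E"
      have "fsm th0 \<tau> = 1/2 * real (cI LL \<tau>) + D * real (cI {l1} \<tau>)"
        unfolding th0_def by (simp only: fsm_add fsm_ind)
      then show "fsm th0 \<tau> \<le> 1/2 + D * real (cI {l1} \<tau>)" using cLL_le1[OF mu \<tau>] by simp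
    qed
  qed
  also have "\<dots> = 1/2 + D * reach \<mu>"
  proof -
    have "(\<integral>\<tau>. 1/2 + D * real (cI {l1} \<tau>) \<partial>?E) = (\<integral>\<tau>. 1/2 \<partial>?E) + (\<integral>\<tau>. D * real (cI {l1} \<tau>) \<partial>?E)"
      by (rule Bochner_Integration.integral_add) (auto intro: integrable_measure_pmf_finite[OF fin])
    then show ?thesis using reach_eq[OF mu, of th0] by simp
  qed
  finally show ?thesis .
qed

lemma val1_le:
  assumes mu: "\<mu> \<in> policies A" and j: "j \<in> LL" "j \<noteq> l1"
  shows "val (mkG H A X (th1 j)) \<mu> \<le> 1/2 + 2 * D - D * reach \<mu>"
proof -
  let ?E = "ep (mkG H A X (th1 j)) \<mu> H 0"
  have fin: "finite (set_pmf ?E)" by (rule finite_ep'[OF mu])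
  have "val (mkG H A X (th1 j)) \<mu> \<le> (\<integral>\<tau>. 1/2 + 2 * D - D * real (cI {l1} \<tau>) \<partial>?E)"
    unfolding val_eq[OF mu th1_range[OF j]]
  proof (rule integral_mono_AE)
    show "integrable ?E (fsm (th1 j))" by (rule integrable_measure_pmf_finite[OF fin])
    show "integrable ?E (\<lambda>\<tau>. 1/2 + 2 * D - D * real (cI {l1} \<tau>))" by (rule integrable_measure_pmf_finite[OF fin])
    show "AE \<tau> in ?E. fsm (th1 j) \<tau> \<le> 1/2 + 2 * D - D * real (cI {l1} \<tau>)"
    proof (subst AE_measure_pmf_iff, intro ballI)
      fix \<tau> assume \<tau>: "\<tau> \<in> set_pmf ?E"
      have e: "fsm (th1 j) \<tau> = 1/2 * real (cI LL \<tau>) + D * real (cI {l1} \<tau>) + 2 * D * real (cI {j} \<tau>)"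
        unfolding th1_def th0_def by (simp only: fsm_add fsm_ind)
      have "cI {l1} \<tau> + cI {j} \<tau> = cI {l1, j} \<tau>"
        using sum_cI[of "{l1, j}" \<tau>] j by simp
      also have "\<dots> \<le> cI LL \<tau>" using j l1_LL by (intro cI_mono) auto
      finally have s: "real (cI {l1} \<tau>) + real (cI {j} \<tau>) \<le> real (cI LL \<tau>)" by linarith
      have c1: "real (cI LL \<tau>) \<le> 1" using cLL_le1[OF mu \<tau>] by simp
      have "2 * D * (real (cI {l1} \<tau>) + real (cI {j} \<tau>)) \<le> 2 * D * real (cI LL \<tau>)"
        using s D0 by (intro mult_left_mono) auto
      moreover have "(1/2 + 2 * D) * real (cI LL \<tau>) \<le> 1/2 + 2 * D"
        using mult_left_mono[OF c1, of "1/2 + 2 * D"] D0 by simp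
      ultimately show "fsm (th1 j) \<tau> \<le> 1/2 + 2 * D - D * real (cI {l1} \<tau>)"
        unfolding e by (simp add: algebra_simps)
    qed
  qed
  also have "\<dots> = 1/2 + 2 * D - D * reach \<mu>"
  proof -
    have "(\<integral>\<tau>. 1/2 + 2 * D - D * real (cI {l1} \<tau>) \<partial>?E) = (\<integral>\<tau>. 1/2 + 2 * D \<partial>?E) - (\<integral>\<tau>. D * real (cI {l1} \<tau>) \<partial>?E)"
      by (rule Bochner_Integration.integral_diff) (auto intro: integrable_measure_pmf_finite[OF fin])
    then show ?thesis using reach_eq[OF mu, of "th1 j"] by simp
  qed
  finally show ?thesis .
qed


lemma regret_ge:
  assumes G: "nact G = A" and ms: "\<mu>s \<in> policies A" and b: "\<And>\<mu>. \<mu> \<in> policies A \<Longrightarrow> val G \<mu> \<le> 1"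
  shows "(\<Sum>t<T. val G \<mu>s - val G (alg (take t hs))) \<le> regret G alg T hs"
  unfolding regret_def G
proof (rule cSup_upper)
  show "(\<Sum>t<T. val G \<mu>s - val G (alg (take t hs))) \<in> (\<lambda>\<mu>. \<Sum>t<T. val G \<mu> - val G (alg (take t hs))) ` policies A"
    using ms by blast
  show "bdd_above ((\<lambda>\<mu>. \<Sum>t<T. val G \<mu> - val G (alg (take t hs))) ` policies A)"
  proof (rule bdd_aboveI2)
    fix \<mu> assume "\<mu> \<in> policies A"
    then show "(\<Sum>t<T. val G \<mu> - val G (alg (take t hs))) \<le> (\<Sum>t<T. 1 - val G (alg (take t hs)))"
      using b by (intro sum_mono) auto
  qed
qed

definition S1 :: "algorithm \<Rightarrow> nat \<Rightarrow> traj list \<Rightarrow> real" where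
  "S1 alg T hs = (\<Sum>t<T. reach (alg (take t hs)))"

lemma regret0:
  assumes alg: "\<And>hs. alg hs \<in> policies A"
  shows "D * (real T - S1 alg T hs) \<le> regret (mkG H A X th0) alg T hs"
proof -
  have ps: "pol A (replicate H 0) \<in> policies A" using A2 by (intro pol_policies) auto
  have v: "val (mkG H A X th0) (pol A (replicate H 0)) = 1/2 + D"
  proof -
    have "val (mkG H A X th0) (pol A (replicate H 0)) = th0 (pr A (replicate H 0))"
      by (rule val_pol) (use rep_PL H1 A2 th0_range th0_van in auto)
    then show ?thesis using l1_LL by (simp add: l1_def[symmetric] th0_def)
  qed
  have "D * (real T - S1 alg T hs) = (\<Sum>t<T. (1/2 + D) - (1/2 + D * reach (alg (take t hs))))"
    by (simp add: S1_def sum_subtractf sum_distrib_left[symmetric] algebra_simps)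
  also have "\<dots> \<le> (\<Sum>t<T. val (mkG H A X th0) (pol A (replicate H 0)) - val (mkG H A X th0) (alg (take t hs)))"
    unfolding v using val0_le[OF alg] by (intro sum_mono) (simp add: algebra_simps)
  also have "\<dots> \<le> regret (mkG H A X th0) alg T hs"
  proof (rule regret_ge[OF _ ps])
    fix \<mu> assume "\<mu> \<in> policies A"
    then show "val (mkG H A X th0) \<mu> \<le> 1"
      by (rule val_le1) (use th0_range th0_LL in auto)
  qed simp
  finally show ?thesis .
qed

lemma regret1:
  assumes alg: "\<And>hs. alg hs \<in> policies A" and j: "j \<in> LL" "j \<noteq> l1"
  shows "D * S1 alg T hs \<le> regret (mkG H A X (th1 j)) alg T hs"
proof -
  obtain p where p: "p \<in> PL A H" "j = pr A p" using j(1) by (auto simp: LL_def LS_def)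
  have ps: "pol A p \<in> policies A" using A2 p(1) by (intro pol_policies) (auto simp: PL_def)
  have v: "val (mkG H A X (th1 j)) (pol A p) = 1/2 + 2 * D"
  proof -
    have "val (mkG H A X (th1 j)) (pol A p) = th1 j (pr A p)"
      by (rule val_pol) (use p(1) H1 A2 th1_range[OF j] th1_van[OF j(1)] in auto)
    then show ?thesis using j p(2)[symmetric] by (simp add: th1_def th0_def)
  qed
  have "D * S1 alg T hs = (\<Sum>t<T. (1/2 + 2 * D) - (1/2 + 2 * D - D * reach (alg (take t hs))))"
    by (simp add: S1_def sum_distrib_left)
  also have "\<dots> \<le> (\<Sum>t<T. val (mkG H A X (th1 j)) (pol A p) - val (mkG H A X (th1 j)) (alg (take t hs)))"
    unfolding v using val1_le[OF alg j] by (intro sum_mono) (simp add: algebra_simps)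
  also have "\<dots> \<le> regret (mkG H A X (th1 j)) alg T hs"
  proof (rule regret_ge[OF _ ps])
    fix \<mu> assume "\<mu> \<in> policies A"
    then show "val (mkG H A X (th1 j)) \<mu> \<le> 1"
      by (rule val_le1) (use th1_range[OF j] th1_LL[OF j] in auto)
  qed simp
  finally show ?thesis .
qed


definition rho :: real where "rho = 1 / (1 - 16 * D\<^sup>2)"

lemma D2: "16 * D\<^sup>2 \<le> 1/4"
proof -
  have "D\<^sup>2 \<le> (1/8)\<^sup>2" using D0 D8 by (intro power_mono) auto
  then show ?thesis by (simp add: power2_eq_square)
qed

lemma rho_ge1: "1 \<le> rho"
  using D2 by (simp add: rho_def field_simps)

lemma Rw_id:
  assumes j: "j \<in> LL" "j \<noteq> l1"
  shows "pmf (Rw (th0 i)) r ^ 2 \<le> rho ^ (if i = j then 1 else 0) * pmf (Rw (th1 j i)) r * pmf (Rw (th2 j i)) r"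
proof (cases "i = j")
  case False
  then show ?thesis by (simp add: th1_def th2_def power2_eq_square)
next
  case True
  have t: "th0 i = 1/2" "th1 j i = 1/2 + 2 * D" "th2 j i = 1/2 - 2 * D"
    using True j by (auto simp: th0_def th1_def th2_def)
  have pos: "0 < 1 - 16 * D\<^sup>2" using D2 by simp
  have key: "rho * ((1/2 + 2 * D) * (1/2 - 2 * D)) = 1/4"
    using pos by (simp add: rho_def field_simps power2_eq_square)
  have r1: "0 \<le> 1/2 - 2 * D" "1/2 + 2 * D \<le> 1" using D0 D8 by auto
  have e0: "pmf (Rw (th0 i)) r = (if r = 1 then 1/2 else if r = 0 then 1/2 else 0)"
    unfolding t by (simp add: pmf_Rw)
  have e1: "pmf (Rw (th1 j i)) r = (if r = 1 then 1/2 + 2 * D else if r = 0 then 1/2 - 2 * D else 0)"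
    unfolding t using r1 D0 by (simp add: pmf_Rw)
  have e2: "pmf (Rw (th2 j i)) r = (if r = 1 then 1/2 - 2 * D else if r = 0 then 1/2 + 2 * D else 0)"
    unfolding t using r1 D0 by (simp add: pmf_Rw)
  have k1: "(1/2::real) ^ 2 = rho * (1/2 + 2 * D) * (1/2 - 2 * D)" using key by (simp add: power2_eq_square mult.assoc)
  have k2: "(1/2::real) ^ 2 = rho * (1/2 - 2 * D) * (1/2 + 2 * D)" using key by (simp add: power2_eq_square mult_ac)
  show ?thesis
    unfolding e0 e1 e2 using True k1 k2 by auto
qed

lemma fin_hist:
  assumes alg: "\<And>hs. alg hs \<in> policies A"
  shows "finite (set_pmf (hist (mkG H A X \<theta>) alg t))"
  by (rule finite_hist) (simp add: episode_mkG finite_ep'[OF alg])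

lemma hist_supp:
  assumes alg: "\<And>hs. alg hs \<in> policies A" and z: "z \<in> set_pmf (hist (mkG H A X \<theta>) alg T)"
  shows "length z = T" "\<And>\<tau>. \<tau> \<in> set z \<Longrightarrow> cI LL \<tau> \<le> 1"
proof -
  note sh = set_hist[OF z]
  show "length z = T" using sh by simp
  fix \<tau> assume "\<tau> \<in> set z"
  then obtain k where k: "k < length z" "\<tau> = z ! k" by (auto simp: in_set_conv_nth)
  then have "\<tau> \<in> set_pmf (ep (mkG H A X \<theta>) (alg (take k z)) H 0)" using sh by (simp add: episode_mkG)
  then show "cI LL \<tau> \<le> 1" by (rule cLL_le1[OF alg])
qed

lemma main_LB:
  fixes alg :: algorithm and T m :: nat and \<delta> :: real
  assumes alg: "\<And>hs. alg hs \<in> policies A" and dl: "0 < \<delta>" "\<delta> < 1/4"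
    and mK: "4 * real T < (real m + 1) * (real (A ^ H) - 1)"
    and rm: "4 * \<delta> \<le> (1 - 16 * D\<^sup>2) ^ m"
  shows "\<exists>\<theta>. (\<theta> = th0 \<or> (\<exists>j\<in>LL - {l1}. \<theta> = th1 j)) \<and>
     \<delta> < measure_pmf.prob (hist (mkG H A X \<theta>) alg T) {hs. D * real T / 2 \<le> regret (mkG H A X \<theta>) alg T hs}"
proof -
  let ?P0 = "hist (mkG H A X th0) alg T"
  define E where "E = {hs. S1 alg T hs \<le> real T / 2}"
  show ?thesis
  proof (cases "\<delta> < measure_pmf.prob ?P0 E")
    case True
    have "E \<subseteq> {hs. D * real T / 2 \<le> regret (mkG H A X th0) alg T hs}"
    proof
      fix hs assume "hs \<in> E"
      then have "D * (real T / 2) \<le> D * (real T - S1 alg T hs)" using D0 by (intro mult_left_mono) (auto simp: E_def)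
      then show "hs \<in> {hs. D * real T / 2 \<le> regret (mkG H A X th0) alg T hs}"
        using regret0[where alg=alg and T=T and hs=hs] alg by simp
    qed
    then have "measure_pmf.prob ?P0 E \<le> measure_pmf.prob ?P0 {hs. D * real T / 2 \<le> regret (mkG H A X th0) alg T hs}"
      by (intro measure_pmf.finite_measure_mono) auto
    then show ?thesis using True by (intro exI[of _ th0]) auto
  next
    case False
    define Ec where "Ec = UNIV - E"
    have PEc: "1 - \<delta> \<le> measure_pmf.prob ?P0 Ec"
      using False measure_pmf.prob_compl[of E ?P0] by (simp add: Ec_def)
    define I where "I = LL - {l1}"
    have finI: "finite I" using finite_LS by (simp add: I_def LL_def)
    have KA: "2 \<le> A ^ H"
    proof -
      have "A ^ 1 \<le> A ^ H" using A2 H1 by (intro power_increasing) auto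
      then show ?thesis using A2 by simp
    qed
    have cardI: "card I = A ^ H - 1" using l1_LL card_LS[OF H1] by (simp add: I_def LL_def)
    have cardI': "real (card I) = real (A ^ H) - 1" using cardI KA by (simp add: of_nat_diff)
    have Ine: "I \<noteq> {}" using cardI KA by auto
    define B where "B = (\<lambda>i. {hs. m < Ncnt i hs})"
    have fin0: "finite (set_pmf ?P0)" by (rule fin_hist[OF alg])
    have sumB: "(\<Sum>i\<in>I. measure_pmf.prob ?P0 (B i)) \<le> real T / (real m + 1)"
    proof (rule prob_sum_bound[OF fin0 finI])
      fix z assume z: "z \<in> set_pmf ?P0"
      have ind: "indicator (B i) z \<le> real (Ncnt i z) / (real m + 1)" for i
        by (auto simp: B_def indicator_def field_simps)
      have "(\<Sum>i\<in>I. Ncnt i z) = sum_list (map (cI I) z)" by (rule Ncnt_sum[OF finI])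
      also have "\<dots> \<le> length z"
      proof (rule sumlist_le)
        fix \<tau> assume "\<tau> \<in> set z"
        then have "cI LL \<tau> \<le> 1" by (rule hist_supp(2)[OF alg z])
        moreover have "cI I \<tau> \<le> cI LL \<tau>" by (rule cI_mono) (auto simp: I_def)
        ultimately show "cI I \<tau> \<le> 1" by simp
      qed
      also have "\<dots> = T" by (rule hist_supp(1)[OF alg z])
      finally have sN: "real (\<Sum>i\<in>I. Ncnt i z) \<le> real T" by (simp only: of_nat_le_iff)
      have "(\<Sum>i\<in>I. indicator (B i) z) \<le> (\<Sum>i\<in>I. real (Ncnt i z) / (real m + 1))"
        by (intro sum_mono ind)
      also have "\<dots> = real (\<Sum>i\<in>I. Ncnt i z) / (real m + 1)" by (simp add: sum_divide_distrib of_nat_sum)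
      also have "\<dots> \<le> real T / (real m + 1)" using sN by (intro divide_right_mono) auto
      finally show "(\<Sum>i\<in>I. indicator (B i) z) \<le> real T / (real m + 1)" .
    qed
    obtain i where iI: "i \<in> I" and PBi: "measure_pmf.prob ?P0 (B i) \<le> real T / (real m + 1) / real (card I)"
      using exists_le_avg[OF finI Ine sumB] by blast
    have cpos: "0 < real (card I)" using Ine finI by (simp add: card_gt_0_iff)
    have den: "0 < (real m + 1) * real (card I)" using cpos by simp
    have "real T / (real m + 1) / real (card I) = real T / ((real m + 1) * real (card I))" by simp
    also have "\<dots> < 1/4"
      unfolding pos_divide_less_eq[OF den] using mK cardI' by simp
    finally have "real T / (real m + 1) / real (card I) < 1/4" .
    then have PB: "measure_pmf.prob ?P0 (B i) < 1/4" using PBi by linarith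
    define F where "F = Ec - B i"
    have "measure_pmf.prob ?P0 Ec \<le> measure_pmf.prob ?P0 (F \<union> B i)"
      by (intro measure_pmf.finite_measure_mono) (auto simp: F_def)
    also have "\<dots> = measure_pmf.prob ?P0 F + measure_pmf.prob ?P0 (B i - F)"
      by (rule measure_pmf.finite_measure_Union') auto
    also have "\<dots> \<le> measure_pmf.prob ?P0 F + measure_pmf.prob ?P0 (B i)"
      by (intro add_left_mono measure_pmf.finite_measure_mono) auto
    finally have PF: "1/2 < measure_pmf.prob ?P0 F" using PEc PB dl by linarith
    have j: "i \<in> LL" "i \<noteq> l1" using iI by (auto simp: I_def)
    let ?P1 = "hist (mkG H A X (th1 i)) alg T"
    let ?P2 = "hist (mkG H A X (th2 i)) alg T"
    have com: "measure_pmf.prob ?P0 F ^ 2 \<le> rho ^ m * measure_pmf.prob ?P1 F"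
    proof (rule com_prob[OF fin0 rho_ge1])
      show "pmf ?P0 z ^ 2 \<le> rho ^ Ncnt i z * pmf ?P1 z * pmf ?P2 z" for z
        by (rule hist_com[OF Rw_id[OF j]]) (use rho_ge1 in auto)
      show "Ncnt i z \<le> m" if "z \<in> F" for z using that by (auto simp: F_def B_def)
    qed
    have pos: "0 < 1 - 16 * D\<^sup>2" using D2 by simp
    have rr: "rho ^ m * (1 - 16 * D\<^sup>2) ^ m = 1"
      using pos by (simp add: rho_def power_mult_distrib[symmetric])
    have "measure_pmf.prob ?P0 F ^ 2 * (1 - 16 * D\<^sup>2) ^ m \<le> measure_pmf.prob ?P1 F"
    proof -
      have "measure_pmf.prob ?P0 F ^ 2 * (1 - 16 * D\<^sup>2) ^ m \<le> rho ^ m * measure_pmf.prob ?P1 F * (1 - 16 * D\<^sup>2) ^ m"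
        using com pos by (intro mult_right_mono) auto
      also have "\<dots> = measure_pmf.prob ?P1 F" using rr by (simp add: algebra_simps)
      finally show ?thesis .
    qed
    moreover have "\<delta> < measure_pmf.prob ?P0 F ^ 2 * (1 - 16 * D\<^sup>2) ^ m"
    proof -
      have "(1/2)^2 < measure_pmf.prob ?P0 F ^ 2" using PF by (intro power_strict_mono) auto
      then have a: "1/4 < measure_pmf.prob ?P0 F ^ 2" by (simp add: power2_eq_square)
      have "1/4 * (4 * \<delta>) < measure_pmf.prob ?P0 F ^ 2 * (1 - 16 * D\<^sup>2) ^ m"
        using a rm dl by (intro mult_less_le_imp_less) auto
      then show ?thesis by simp
    qed
    moreover have "F \<subseteq> {hs. D * real T / 2 \<le> regret (mkG H A X (th1 i)) alg T hs}"
    proof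
      fix hs assume "hs \<in> F"
      then have "real T / 2 < S1 alg T hs" by (auto simp: F_def Ec_def E_def)
      then have "D * (real T / 2) \<le> D * S1 alg T hs" using D0 by (intro mult_left_mono) auto
      then show "hs \<in> {hs. D * real T / 2 \<le> regret (mkG H A X (th1 i)) alg T hs}"
        using regret1[where alg=alg and T=T and hs=hs and j=i] alg j by simp
    qed
    then have "measure_pmf.prob ?P1 F \<le> measure_pmf.prob ?P1 {hs. D * real T / 2 \<le> regret (mkG H A X (th1 i)) alg T hs}"
      by (intro measure_pmf.finite_measure_mono) auto
    ultimately show ?thesis using iI by (intro exI[of _ "th1 i"]) (auto simp: I_def)
  qed
qed

end


theorem mainTheorem13:
  "\<exists>c>0. \<forall>(H::nat) (T::nat) (A::nat) (X::nat) (\<delta>::real) (alg::algorithm).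
     A \<ge> 2 \<longrightarrow>
     (real A ^ H - 1) / (real A - 1) \<le> real X \<longrightarrow>
     real X < 2 * (real A ^ H - 1) / (real A - 1) \<longrightarrow>
     0 < \<delta> \<longrightarrow> \<delta> < 1/4 \<longrightarrow>
     real T \<ge> 0.4 * (2 * real A ^ H) * ln (1 / (4 * \<delta>)) \<longrightarrow>
     (\<forall>hs x. set_pmf (alg hs x) \<subseteq> {..<A}) \<longrightarrow>
     (\<exists>G. wf_game G \<and> hor G = H \<and> nact G = A \<and> card (infs G) = X \<and>
        measure_pmf.prob (hist G alg T)
          {hs. regret G alg T hs \<ge> c * sqrt (real T * (real A * real X) * ln (1 / (4 * \<delta>)))}
        > \<delta>)"
proof (intro exI[of _ "1/64"] conjI allI impI)
  show "0 < (1/64::real)" by simp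
  fix H T A X :: nat and \<delta> :: real and alg :: algorithm
  assume A2: "A \<ge> 2" and X1: "(real A ^ H - 1) / (real A - 1) \<le> real X"
    and X2: "real X < 2 * (real A ^ H - 1) / (real A - 1)"
    and d0: "0 < \<delta>" and d1: "\<delta> < 1/4"
    and TT: "real T \<ge> 0.4 * (2 * real A ^ H) * ln (1 / (4 * \<delta>))"
    and algp: "\<forall>hs x. set_pmf (alg hs x) \<subseteq> {..<A}"
  have Am: "0 < real A - 1" using A2 by simp
  have H1: "1 \<le> H"
  proof (rule ccontr)
    assume "\<not> 1 \<le> H" then have "H = 0" by simp
    then show False using X1 X2 by simp
  qed
  have Sg: "real (Ssum A H) = (real A ^ H - 1) / (real A - 1)"
  proof -
    have "real (Ssum A H) = (\<Sum>j<H. real A ^ j)" by (simp add: Ssum_def)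
    also have "\<dots> = (real A ^ H - 1) / (real A - 1)" using A2 by (intro geometric_sum) simp
    finally show ?thesis .
  qed
  have SX: "Ssum A H \<le> X" using X1 Sg by linarith
  define L where "L = ln (1 / (4 * \<delta>))"
  have L0: "0 < L" using d0 d1 by (simp add: L_def)
  define K where "K = real A ^ H"
  have K2: "2 \<le> K"
  proof -
    have "A ^ 1 \<le> A ^ H" using A2 H1 by (intro power_increasing) auto
    then have "2 \<le> A ^ H" using A2 by simp
    then have "real 2 \<le> real (A ^ H)" by (simp only: of_nat_le_iff)
    then show ?thesis by (simp add: K_def)
  qed
  have T0: "0 < real T"
  proof -
    have "0 < 0.4 * (2 * K) * L" using K2 L0 by simp
    then show ?thesis using TT by (simp add: K_def L_def)
  qed
  define D where "D = min (1/8) (sqrt (L * (K - 1) / (128 * real T)))"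
  have D0: "0 \<le> D" using L0 K2 T0 by (simp add: D_def)
  have D8: "D \<le> 1/8" by (simp add: D_def)
  define m where "m = nat \<lfloor>4 * real T / (K - 1)\<rfloor>"
  have q0: "0 \<le> 4 * real T / (K - 1)" using T0 K2 by simp
  have mle: "real m \<le> 4 * real T / (K - 1)" using q0 by (simp add: m_def)
  have mgt: "4 * real T / (K - 1) < real m + 1" using q0 by (simp add: m_def)
  have mK: "4 * real T < (real m + 1) * (real (A ^ H) - 1)"
  proof -
    have "4 * real T / (K - 1) * (K - 1) < (real m + 1) * (K - 1)"
      using mgt K2 by (intro mult_strict_right_mono) auto
    then show ?thesis using K2 by (simp add: K_def)
  qed
  have rm: "4 * \<delta> \<le> (1 - 16 * D\<^sup>2) ^ m"
    by (rule num_m[OF d0 d1 L_def T0 K2 D_def mle])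
  interpret LB A H X D using A2 H1 D0 D8 by unfold_locales auto
  have alg: "\<And>hs. alg hs \<in> policies A" using algp by (simp add: policies_def)
  obtain \<theta> where th: "\<delta> < measure_pmf.prob (hist (mkG H A X \<theta>) alg T) {hs. D * real T / 2 \<le> regret (mkG H A X \<theta>) alg T hs}"
    using main_LB[where alg=alg, OF alg d0 d1 mK rm] by blast
  have AX: "real A * real X \<le> 4 * K"
  proof -
    have "real X * (real A - 1) < 2 * (K - 1)"
      using X2 Am by (simp add: K_def pos_less_divide_eq)
    moreover have "real X \<le> 2 * (K - 1)"
    proof -
      have "2 * (K - 1) * 1 \<le> 2 * (K - 1) * (real A - 1)"
        using K2 A2 by (intro mult_left_mono) auto
      then have "2 * (K - 1) / (real A - 1) \<le> 2 * (K - 1)"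
        unfolding pos_divide_le_eq[OF Am] by simp
      then show ?thesis using X2 by (simp add: K_def)
    qed
    ultimately have "real X * (real A - 1) + real X < 4 * (K - 1)" by linarith
    then show ?thesis by (simp add: algebra_simps)
  qed
  have bnd: "1/64 * sqrt (real T * (real A * real X) * L) \<le> D * real T / 2"
    unfolding D_def by (rule num_bound[OF K2 T0 L0 _ AX]) (use TT in \<open>auto simp: K_def L_def\<close>)
  show "\<exists>G. wf_game G \<and> hor G = H \<and> nact G = A \<and> card (infs G) = X \<and>
        measure_pmf.prob (hist G alg T)
          {hs. regret G alg T hs \<ge> 1/64 * sqrt (real T * (real A * real X) * ln (1 / (4 * \<delta>)))}
        > \<delta>"
  proof (intro exI[of _ "mkG H A X \<theta>"] conjI)
    show "wf_game (mkG H A X \<theta>)" by (rule wf_mkG[OF A2 H1 SX])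
    show "hor (mkG H A X \<theta>) = H" by simp
    show "nact (mkG H A X \<theta>) = A" by simp
    show "card (infs (mkG H A X \<theta>)) = X" by simp
    have "measure_pmf.prob (hist (mkG H A X \<theta>) alg T) {hs. D * real T / 2 \<le> regret (mkG H A X \<theta>) alg T hs}
      \<le> measure_pmf.prob (hist (mkG H A X \<theta>) alg T)
          {hs. regret (mkG H A X \<theta>) alg T hs \<ge> 1/64 * sqrt (real T * (real A * real X) * ln (1 / (4 * \<delta>)))}"
      using bnd by (intro measure_pmf.finite_measure_mono) (auto simp: L_def)
    then show "measure_pmf.prob (hist (mkG H A X \<theta>) alg T)
          {hs. regret (mkG H A X \<theta>) alg T hs \<ge> 1/64 * sqrt (real T * (real A * real X) * ln (1 / (4 * \<delta>)))}
        > \<delta>" using th by linarith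
  qed
qed

end
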